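(* Let $(W,S)$ be a Coxeter system with $S=D$ finite and $W$ infinite. Suppose $W(t)=R(t)/S(t)$ where $R(t)=\prod_{i=1}^m[n_i]$ for some integers $n_i\ge 2$ and $S(t)$ is a polynomial. Put $N=\deg R=\sum_{i=1}^m(n_i-1)$ and let $b_j$ denote the coefficient of $t^j$ in $S(t)$. Then $\deg S\le N$ and: (1) $\displaystyle b_N=(-1)^{|D|+1}-\sum_{X\subsetneq D,\ |W_X|=\infty}(-1)^{|X|}$; (2) if $W$ has no infinite proper special subgroup (e.g. $W$ is Lannér or irreducible affine), then $b_N=(-1)^{|D|+1}$; (3) if $W$ is $1$-terminal (in particular if $W$ is quasi-Lannér), then $b_N=(-1)^{|D|}(\mathrm{Inf}-1)$, where $\mathrm{Inf}$ is the number of subsets $X\subsetneq D$ with $W_X$ infinite.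
   Context: $[n]=1+t+\dots+t^{n-1}$. For $X\subseteq S$, $W_X$ is the special subgroup generated by $X$; $W(t)=\sum_{g\in W}t^{l(g)}$ is the Poincaré series with respect to word length. An infinite Coxeter group $W$ is called $1$-terminal if it has at least one infinite proper special subgroup, and no infinite proper special subgroup $W_X$ ($X\subsetneq S$) contains an infinite special subgroup $W_Y$ with $Y\subsetneq X$ (i.e. the longest chains $W=W_{X_0}\supsetneq W_{X_1}\supsetneq\cdots$ of infinite special subgroups have length $1$). Lannér: connected Coxeter diagram, neither spherical nor Euclidean, all proper connected subdiagrams spherical. Quasi-Lannér: connected, neither spherical nor Euclidean, all proper connected subdiagrams spherical or Euclidean, at least one Euclidean. *)

theory Defs
  imports "HOL-Computational_Algebra.Computational_Algebra"
begin

text \<open>Coxeter matrix on a finite set S: m s t :: nat, where 0 encodes infinity.\<close>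
definition coxeter_matrix :: "('a \<Rightarrow> 'a \<Rightarrow> nat) \<Rightarrow> 'a set \<Rightarrow> bool" where
  "coxeter_matrix m S \<longleftrightarrow> finite S \<and> (\<forall>s\<in>S. m s s = 1) \<and>
     (\<forall>s\<in>S. \<forall>t\<in>S. m s t = m t s) \<and> (\<forall>s\<in>S. \<forall>t\<in>S. s \<noteq> t \<longrightarrow> m s t \<noteq> 1)"

fun alt :: "'a \<Rightarrow> 'a \<Rightarrow> nat \<Rightarrow> 'a list" where
  "alt s t 0 = []"
| "alt s t (Suc k) = s # alt t s k"

definition cox_relators :: "('a \<Rightarrow> 'a \<Rightarrow> nat) \<Rightarrow> 'a set \<Rightarrow> 'a list set" where
  "cox_relators m S = {alt s t (2 * m s t) | s t. s \<in> S \<and> t \<in> S \<and> m s t \<noteq> 0}"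

definition cox_step :: "('a \<Rightarrow> 'a \<Rightarrow> nat) \<Rightarrow> 'a set \<Rightarrow> ('a list \<times> 'a list) set" where
  "cox_step m S = {(u @ r @ v, u @ v) | u r v. u \<in> lists S \<and> v \<in> lists S \<and> r \<in> cox_relators m S}"

text \<open>Word equality in the Coxeter group W = < S | (st)^{m(s,t)} > (a monoid presentation
  suffices since all generators are involutions).\<close>
definition cox_eq :: "('a \<Rightarrow> 'a \<Rightarrow> nat) \<Rightarrow> 'a set \<Rightarrow> ('a list \<times> 'a list) set" where
  "cox_eq m S = (cox_step m S \<union> (cox_step m S)\<inverse>)\<^sup>*"

text \<open>The group element represented by a word, as its class of words.\<close>
definition cox_elem :: "('a \<Rightarrow> 'a \<Rightarrow> nat) \<Rightarrow> 'a set \<Rightarrow> 'a list \<Rightarrow> 'a list set" where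
  "cox_elem m S w = {v. (w, v) \<in> cox_eq m S}"

definition special :: "('a \<Rightarrow> 'a \<Rightarrow> nat) \<Rightarrow> 'a set \<Rightarrow> 'a set \<Rightarrow> 'a list set set" where
  "special m S X = cox_elem m S ` lists X"

abbreviation coxW :: "('a \<Rightarrow> 'a \<Rightarrow> nat) \<Rightarrow> 'a set \<Rightarrow> 'a list set set" where
  "coxW m S \<equiv> special m S S"

definition word_length :: "'a list set \<Rightarrow> nat" where
  "word_length g = (LEAST k. \<exists>v\<in>g. length v = k)"

definition poincare :: "('a \<Rightarrow> 'a \<Rightarrow> nat) \<Rightarrow> 'a set \<Rightarrow> real fps" where
  "poincare m S = Abs_fps (\<lambda>k. of_nat (card {g \<in> coxW m S. word_length g = k}))"

definition qint :: "nat \<Rightarrow> real poly" where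
  "qint n = (\<Sum>i<n. monom 1 i)"

definition one_terminal :: "('a \<Rightarrow> 'a \<Rightarrow> nat) \<Rightarrow> 'a set \<Rightarrow> bool" where
  "one_terminal m S \<longleftrightarrow> infinite (coxW m S) \<and>
     (\<exists>X. X \<subset> S \<and> infinite (special m S X)) \<and>
     (\<forall>X. X \<subset> S \<and> infinite (special m S X) \<longrightarrow>
        \<not> (\<exists>Y. Y \<subset> X \<and> infinite (special m S Y)))"

end

theory Submission
  imports Defs
begin

lemma alt_Suc_Suc: "alt s t (Suc (Suc k)) = s # t # alt s t k" by simp

lemma alt_add2: "alt s t (2*a + n) = alt s t (2*a) @ alt s t n"
  by (induction a) (auto simp: mult_2 numeral_2_eq_2 simp del: alt.simps(2) simp add: alt_Suc_Suc[of s t] add.commute[of "Suc _"] add_Suc_right)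

lemma alt_snoc: "alt s t (Suc n) = alt s t n @ [if even n then s else t]"
  by (induction n arbitrary: s t) auto

lemma rev_alt_even: "even n \<Longrightarrow> rev (alt s t n) = alt t s n"
proof (induction n arbitrary: s t rule: less_induct)
  case (less n)
  show ?case
  proof (cases n)
    case 0 then show ?thesis by simp
  next
    case (Suc k)
    then obtain j where k: "k = Suc j" using less.prems by (cases k) auto
    have "rev (alt s t n) = rev (alt s t j) @ [t, s]" using Suc k by simp
    also have "rev (alt s t j) = alt t s j" using less.IH[of j] less.prems Suc k by auto
    also have "alt t s j @ [t, s] = alt t s n"
      using Suc k less.prems alt_snoc[of t s j] alt_snoc[of t s "Suc j"] by auto
    finally show ?thesis .
  qed
qed

lemma set_alt: "set (alt s t n) \<subseteq> {s, t}"
  by (induction n arbitrary: s t) auto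

lemma length_alt[simp]: "length (alt s t n) = n"
  by (induction n arbitrary: s t) auto

lemma take_alt: "i \<le> n \<Longrightarrow> take i (alt s t n) = alt s t i"
  by (induction n arbitrary: s t i) (auto simp: take_Cons split: nat.splits)

lemma nth_alt: "i < n \<Longrightarrow> alt s t n ! i = (if even i then s else t)"
  by (induction n arbitrary: s t i) (auto simp: nth_Cons split: nat.splits)

lemma alt_odd: "alt s t (2*j+1) = alt s t j @ [if even j then s else t] @ rev (alt s t j)"
proof (induction j arbitrary: s t)
  case 0 then show ?case by simp
next
  case (Suc j)
  have "alt s t (2 * Suc j + 1) = s # alt t s (Suc (2*j+1))"
    by (simp only: mult_Suc_right add_Suc_right add_Suc alt.simps) simp
  also have "\<dots> = s # alt t s (2*j+1) @ [s]" using alt_snoc[of t s "2*j+1"] by simp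
  also have "\<dots> = s # alt t s j @ [if even j then t else s] @ rev (alt t s j) @ [s]"
    using Suc.IH[of t s] by simp
  also have "\<dots> = alt s t (Suc j) @ [if even (Suc j) then s else t] @ rev (alt s t (Suc j))"
    by (simp only: alt.simps) simp
  finally show ?case .
qed

definition reflw :: "'a list \<Rightarrow> nat \<Rightarrow> 'a list" where
  "reflw w i = take i w @ [w!i] @ rev (take i w)"

definition delw :: "nat \<Rightarrow> 'a list \<Rightarrow> 'a list" where
  "delw i w = take i w @ drop (Suc i) w"

lemma reflw_alt: "j < n \<Longrightarrow> reflw (alt s t n) j = alt s t (2*j+1)"
  unfolding reflw_def using alt_odd[of s t j] by (simp add: take_alt nth_alt del: alt.simps)

lemma reflw_app1: "i < length a \<Longrightarrow> reflw (a@b) i = reflw a i"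
  unfolding reflw_def by (simp add: nth_append)

lemma reflw_app2: "reflw (a@b) (length a + j) = a @ reflw b j @ rev a"
  unfolding reflw_def by (simp add: nth_append)

lemma rev_reflw[simp]: "rev (reflw w i) = reflw w i"
  unfolding reflw_def by simp

lemma length_delw: "i < length w \<Longrightarrow> length (delw i w) = length w - 1"
  unfolding delw_def by simp

lemma set_delw: "set (delw i w) \<subseteq> set w"
  unfolding delw_def by (auto dest: in_set_takeD in_set_dropD)

lemma set_reflw: "i < length w \<Longrightarrow> set (reflw w i) \<subseteq> set w"
  unfolding reflw_def by (auto dest: in_set_takeD)



locale cox =
  fixes m :: "'a \<Rightarrow> 'a \<Rightarrow> nat" and D :: "'a set"
  assumes cm: "coxeter_matrix m D"
begin

definition ceq :: "'a list \<Rightarrow> 'a list \<Rightarrow> bool" where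
  "ceq w v \<longleftrightarrow> (w, v) \<in> cox_eq m D"

lemma finD: "finite D" using cm unfolding coxeter_matrix_def by auto
lemma m_diag: "s \<in> D \<Longrightarrow> m s s = 1" using cm unfolding coxeter_matrix_def by auto
lemma m_sym: "s \<in> D \<Longrightarrow> t \<in> D \<Longrightarrow> m s t = m t s" using cm unfolding coxeter_matrix_def by auto

lemma ceq_refl[simp]: "ceq w w" unfolding ceq_def cox_eq_def by simp

lemma ceq_sym: "ceq w v \<Longrightarrow> ceq v w"
  unfolding ceq_def cox_eq_def
  by (metis converse_Un converse_converse rtrancl_converseI sup_commute)

lemma ceq_trans[trans]: "ceq u v \<Longrightarrow> ceq v w \<Longrightarrow> ceq u w"
  unfolding ceq_def cox_eq_def by (meson rtrancl_trans)

lemma relator_lists: "r \<in> cox_relators m D \<Longrightarrow> r \<in> lists D"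
  unfolding cox_relators_def using set_alt by fastforce

lemma step_lists: "(x, y) \<in> cox_step m D \<union> (cox_step m D)\<inverse> \<Longrightarrow> x \<in> lists D \<and> y \<in> lists D"
  unfolding cox_step_def using relator_lists by fastforce

lemma ceq_cases: "ceq w v \<Longrightarrow> w = v \<or> (w \<in> lists D \<and> v \<in> lists D)"
  unfolding ceq_def cox_eq_def
proof (induction rule: rtrancl_induct)
  case base then show ?case by simp
next
  case (step y z) then show ?case using step_lists by blast
qed

lemma ceq_lists: "ceq w v \<Longrightarrow> w \<in> lists D \<Longrightarrow> v \<in> lists D"
  using ceq_cases by blast

lemma ceq_relator: "r \<in> cox_relators m D \<Longrightarrow> u \<in> lists D \<Longrightarrow> v \<in> lists D \<Longrightarrow> ceq (u@r@v) (u@v)"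
  unfolding ceq_def cox_eq_def cox_step_def by blast

lemma ceq_cong: assumes "ceq w v" "a \<in> lists D" "b \<in> lists D" shows "ceq (a@w@b) (a@v@b)"
  using assms(1) unfolding ceq_def cox_eq_def
proof (induction rule: rtrancl_induct)
  case base then show ?case by simp
next
  case (step y z)
  have "(a@y@b, a@z@b) \<in> cox_step m D \<union> (cox_step m D)\<inverse>"
  proof -
    from step(2) consider "(y,z) \<in> cox_step m D" | "(z,y) \<in> cox_step m D" by blast
    then show ?thesis
    proof cases
      case 1
      then obtain u r v' where "y = u@r@v'" "z = u@v'" "u \<in> lists D" "v' \<in> lists D" "r \<in> cox_relators m D"
        unfolding cox_step_def by blast
      then have "(a@y@b, a@z@b) \<in> cox_step m D"
        unfolding cox_step_def using assms(2,3) by (intro CollectI exI[of _ "a@u"] exI[of _ r] exI[of _ "v'@b"]) auto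
      then show ?thesis by blast
    next
      case 2
      then obtain u r v' where "z = u@r@v'" "y = u@v'" "u \<in> lists D" "v' \<in> lists D" "r \<in> cox_relators m D"
        unfolding cox_step_def by blast
      then have "(a@z@b, a@y@b) \<in> cox_step m D"
        unfolding cox_step_def using assms(2,3) by (intro CollectI exI[of _ "a@u"] exI[of _ r] exI[of _ "v'@b"]) auto
      then show ?thesis by blast
    qed
  qed
  then show ?case using step(3) by (meson rtrancl.rtrancl_into_rtrancl)
qed

lemma ceq_cong_l: "ceq w v \<Longrightarrow> a \<in> lists D \<Longrightarrow> ceq (a@w) (a@v)"
  using ceq_cong[of w v a "[]"] by simp
lemma ceq_cong_r: "ceq w v \<Longrightarrow> b \<in> lists D \<Longrightarrow> ceq (w@b) (v@b)"
  using ceq_cong[of w v "[]" b] by simp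

lemma ceq_app: "ceq w v \<Longrightarrow> ceq w' v' \<Longrightarrow> w \<in> lists D \<Longrightarrow> w' \<in> lists D \<Longrightarrow> ceq (w@w') (v@v')"
  by (meson ceq_cong_l ceq_cong_r ceq_lists ceq_trans)

lemma ceq_ss: "s \<in> D \<Longrightarrow> ceq [s,s] []"
proof -
  assume s: "s \<in> D"
  have "alt s s (2 * m s s) \<in> cox_relators m D" unfolding cox_relators_def mem_Collect_eq
    using s m_diag[OF s] by (intro exI[of _ s]) simp
  moreover have "alt s s (2 * m s s) = [s,s]" using m_diag[OF s] by (simp add: numeral_2_eq_2)
  ultimately show ?thesis using ceq_relator[of "[s,s]" "[]" "[]"] by simp
qed

lemma ceq_rev: assumes "ceq w v" shows "ceq (rev w) (rev v)"
  using assms unfolding ceq_def cox_eq_def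
proof (induction rule: rtrancl_induct)
  case base then show ?case by simp
next
  case (step y z)
  have rr: "r \<in> cox_relators m D \<Longrightarrow> rev r \<in> cox_relators m D" for r
  proof -
    assume "r \<in> cox_relators m D"
    then obtain s t where "r = alt s t (2 * m s t)" "s \<in> D" "t \<in> D" "m s t \<noteq> 0"
      unfolding cox_relators_def by blast
    then have "rev r = alt t s (2 * m t s)" using rev_alt_even[of "2 * m s t" s t] m_sym by simp
    then show ?thesis unfolding cox_relators_def mem_Collect_eq using \<open>s \<in> D\<close> \<open>t \<in> D\<close> \<open>m s t \<noteq> 0\<close> m_sym[of s t]
      by (intro exI[of _ t] exI[of _ s]) simp
  qed
  have "(rev y, rev z) \<in> cox_step m D \<union> (cox_step m D)\<inverse>"
  proof -
    from step(2) consider "(y,z) \<in> cox_step m D" | "(z,y) \<in> cox_step m D" by blast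
    then show ?thesis
    proof cases
      case 1
      then obtain u r v where "y = u@r@v" "z = u@v" "u \<in> lists D" "v \<in> lists D" "r \<in> cox_relators m D"
        unfolding cox_step_def by blast
      then have "(rev y, rev z) \<in> cox_step m D" unfolding cox_step_def using rr
        by (intro CollectI exI[of _ "rev v"] exI[of _ "rev r"] exI[of _ "rev u"]) (simp add: in_lists_conv_set)
      then show ?thesis by blast
    next
      case 2
      then obtain u r v where "z = u@r@v" "y = u@v" "u \<in> lists D" "v \<in> lists D" "r \<in> cox_relators m D"
        unfolding cox_step_def by blast
      then have "(rev z, rev y) \<in> cox_step m D" unfolding cox_step_def using rr
        by (intro CollectI exI[of _ "rev v"] exI[of _ "rev r"] exI[of _ "rev u"]) (simp add: in_lists_conv_set)
      then show ?thesis by blast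
    qed
  qed
  then show ?case using step(3) by (meson rtrancl.rtrancl_into_rtrancl)
qed

lemma ceq_inv: "w \<in> lists D \<Longrightarrow> ceq (w @ rev w) []"
proof (induction w)
  case Nil then show ?case by simp
next
  case (Cons x w)
  have "ceq ([x] @ (w @ rev w) @ [x]) ([x] @ [] @ [x])"
    using Cons by (intro ceq_cong) auto
  also have "ceq ([x] @ [] @ [x]) []" using ceq_ss Cons by simp
  finally show ?case by simp
qed

lemma ceq_inv': "w \<in> lists D \<Longrightarrow> ceq (rev w @ w) []"
  using ceq_inv[of "rev w"] by (simp add: in_lists_conv_set)

lemma ceq_cancel_l: "ceq (a@w) (a@v) \<Longrightarrow> a \<in> lists D \<Longrightarrow> w \<in> lists D \<Longrightarrow> ceq w v"
proof -
  assume h: "ceq (a@w) (a@v)" and a: "a \<in> lists D" and w: "w \<in> lists D"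
  have v: "v \<in> lists D" using ceq_lists[OF h] a w by simp
  have "ceq w ((rev a @ a) @ w)" using ceq_cong_r[OF ceq_inv'[OF a] w] by (auto intro: ceq_sym)
  also have "ceq ((rev a @ a) @ w) (rev a @ (a @ v))" using ceq_cong_l[OF h, of "rev a"] a by (simp add: in_lists_conv_set)
  also have "ceq (rev a @ (a @ v)) v" using ceq_cong_r[OF ceq_inv'[OF a] v] by simp
  finally show ?thesis .
qed

lemma ceq_cancel_r: "ceq (w@a) (v@a) \<Longrightarrow> a \<in> lists D \<Longrightarrow> w \<in> lists D \<Longrightarrow> ceq w v"
  using ceq_cancel_l[of "rev a" "rev w" "rev v"] ceq_rev[of "w@a" "v@a"] ceq_rev[of "rev w" "rev v"]
  by (simp add: in_lists_conv_set)

lemma ceq_parity: assumes "ceq w v" shows "even (length w) = even (length v)"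
  using assms unfolding ceq_def cox_eq_def
proof (induction rule: rtrancl_induct)
  case base then show ?case by simp
next
  case (step y z)
  have ev: "r \<in> cox_relators m D \<Longrightarrow> even (length r)" for r
    unfolding cox_relators_def by auto
  from step(2) have "even (length y) = even (length z)"
    unfolding cox_step_def using ev by auto
  then show ?case using step(3) by simp
qed

end


context cox begin

lemma ceq_iff: "ceq a b \<Longrightarrow> ceq a r = ceq b r"
  using ceq_sym ceq_trans by blast

definition ncnt :: "'a list \<Rightarrow> 'a list \<Rightarrow> nat" where
  "ncnt w r = card {i. i < length w \<and> ceq (reflw w i) r}"

lemma ncnt_append:
  "ncnt (a@b) r = ncnt a r + card {j. j < length b \<and> ceq (a @ reflw b j @ rev a) r}"
proof -
  let ?A = "{i. i < length a \<and> ceq (reflw a i) r}"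
  let ?B = "{j. j < length b \<and> ceq (a @ reflw b j @ rev a) r}"
  have eq: "{i. i < length (a@b) \<and> ceq (reflw (a@b) i) r} = ?A \<union> (\<lambda>j. length a + j) ` ?B"
  proof (rule set_eqI, rule iffI)
    fix i assume "i \<in> {i. i < length (a@b) \<and> ceq (reflw (a@b) i) r}"
    then have i: "i < length (a@b)" "ceq (reflw (a@b) i) r" by auto
    show "i \<in> ?A \<union> (\<lambda>j. length a + j) ` ?B"
    proof (cases "i < length a")
      case True then show ?thesis using i reflw_app1[OF True, of b] by auto
    next
      case False
      then obtain j where j: "i = length a + j" by (metis le_add_diff_inverse not_less)
      then show ?thesis using i reflw_app2[of a b j] by auto
    qed
  next
    fix i assume "i \<in> ?A \<union> (\<lambda>j. length a + j) ` ?B"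
    then show "i \<in> {i. i < length (a@b) \<and> ceq (reflw (a@b) i) r}"
      by (auto simp add: reflw_app1 reflw_app2)
  qed
  have "card (?A \<union> (\<lambda>j. length a + j) ` ?B) = card ?A + card ((\<lambda>j. length a + j) ` ?B)"
    by (rule card_Un_disjoint) auto
  also have "card ((\<lambda>j. length a + j) ` ?B) = card ?B" by (rule card_image) (auto simp: inj_on_def)
  finally show ?thesis unfolding ncnt_def eq .
qed

lemma reflw_lists: "w \<in> lists D \<Longrightarrow> i < length w \<Longrightarrow> reflw w i \<in> lists D"
  using set_reflw by (auto simp: in_lists_conv_set)

lemma relator_ceq: "rel \<in> cox_relators m D \<Longrightarrow> ceq rel []"
  using ceq_relator[of rel "[]" "[]"] by simp

lemma card_double:
  fixes P :: "nat \<Rightarrow> bool"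
  assumes "\<And>j. j < k \<Longrightarrow> P (j + k) = P j"
  shows "card {j. j < 2*k \<and> P j} = 2 * card {j. j < k \<and> P j}"
proof -
  have eq: "{j. j < 2*k \<and> P j} = {j. j < k \<and> P j} \<union> (\<lambda>j. j + k) ` {j. j < k \<and> P j}"
  proof (rule set_eqI, rule iffI)
    fix i assume i: "i \<in> {j. j < 2*k \<and> P j}"
    show "i \<in> {j. j < k \<and> P j} \<union> (\<lambda>j. j + k) ` {j. j < k \<and> P j}"
    proof (cases "i < k")
      case True then show ?thesis using i by auto
    next
      case False
      then obtain j where j: "i = j + k" by (metis le_add_diff_inverse2 not_less)
      then show ?thesis using i assms[of j] by auto
    qed
  next
    fix i assume "i \<in> {j. j < k \<and> P j} \<union> (\<lambda>j. j + k) ` {j. j < k \<and> P j}"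
    then show "i \<in> {j. j < 2*k \<and> P j}" using assms by auto
  qed
  have "card ({j. j < k \<and> P j} \<union> (\<lambda>j. j + k) ` {j. j < k \<and> P j})
     = card {j. j < k \<and> P j} + card ((\<lambda>j. j + k) ` {j. j < k \<and> P j})"
    by (rule card_Un_disjoint) auto
  also have "card ((\<lambda>j. j + k) ` {j. j < k \<and> P j}) = card {j. j < k \<and> P j}"
    by (rule card_image) (auto simp: inj_on_def)
  finally show ?thesis unfolding eq by simp
qed

lemma ncnt_step:
  assumes rel: "rel \<in> cox_relators m D" and u: "u \<in> lists D" and v: "v \<in> lists D"
  shows "even (ncnt (u@rel@v) r) = even (ncnt (u@v) r)"
proof -
  have relD: "rel \<in> lists D" using relator_lists[OF rel] .
  have rel0: "ceq rel []" using relator_ceq[OF rel] .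
  have rrel0: "ceq (rev rel) []" using ceq_rev[OF rel0] by simp
  have A: "ncnt ((u@rel)@v) r = ncnt (u@rel) r + card {j. j < length v \<and> ceq ((u@rel) @ reflw v j @ rev (u@rel)) r}"
    by (rule ncnt_append)
  have B: "ncnt (u@rel) r = ncnt u r + card {j. j < length rel \<and> ceq (u @ reflw rel j @ rev u) r}"
    by (rule ncnt_append)
  have C: "ncnt (u@v) r = ncnt u r + card {j. j < length v \<and> ceq (u @ reflw v j @ rev u) r}"
    by (rule ncnt_append)
  have same: "{j. j < length v \<and> ceq ((u@rel) @ reflw v j @ rev (u@rel)) r}
       = {j. j < length v \<and> ceq (u @ reflw v j @ rev u) r}"
  proof -
    have "ceq ((u@rel) @ reflw v j @ rev (u@rel)) (u @ reflw v j @ rev u)" if j: "j < length v" for j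
    proof -
      have X: "reflw v j \<in> lists D" using reflw_lists[OF v j] .
      have uX: "u @ reflw v j \<in> lists D" "rev u \<in> lists D" using u X by (auto simp add: in_lists_conv_set)
      have bD: "reflw v j @ rev rel @ rev u \<in> lists D" using u X relD by (auto simp add: in_lists_conv_set)
      have "ceq (u @ rel @ (reflw v j @ rev rel @ rev u)) (u @ [] @ (reflw v j @ rev rel @ rev u))"
        using ceq_cong[OF rel0 u bD] .
      also have "u @ [] @ (reflw v j @ rev rel @ rev u) = (u @ reflw v j) @ rev rel @ rev u" by simp
      also have "ceq ((u @ reflw v j) @ rev rel @ rev u) ((u @ reflw v j) @ [] @ rev u)"
        using ceq_cong[OF rrel0 uX] .
      finally show ?thesis by simp
    qed
    then show ?thesis using ceq_iff by (intro Collect_cong) blast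
  qed
  obtain s t where st: "rel = alt s t (2 * m s t)" "s \<in> D" "t \<in> D" "m s t \<noteq> 0"
    using rel unfolding cox_relators_def by blast
  let ?k = "m s t"
  let ?P = "\<lambda>j. ceq (u @ reflw rel j @ rev u) r"
  have per: "?P (j + ?k) = ?P j" if j: "j < ?k" for j
  proof -
    have "reflw rel (j + ?k) = alt s t (2*?k + (2*j+1))"
      using st(1) reflw_alt[of "j + ?k" "2 * m s t" s t] j by (simp add: algebra_simps)
    also have "\<dots> = rel @ reflw rel j" using alt_add2[of s t ?k "2*j+1"] st(1) reflw_alt[of j "2 * m s t" s t] j
      by simp
    finally have e: "reflw rel (j + ?k) = rel @ reflw rel j" .
    have X: "reflw rel j \<in> lists D" using reflw_lists[OF relD] j st(1) by simp
    have bD: "reflw rel j @ rev u \<in> lists D" using u X by (auto simp add: in_lists_conv_set)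
    have "ceq (u @ rel @ (reflw rel j @ rev u)) (u @ [] @ (reflw rel j @ rev u))"
      using ceq_cong[OF rel0 u bD] .
    then have "ceq (u @ reflw rel (j + ?k) @ rev u) (u @ reflw rel j @ rev u)" using e by simp
    then show ?thesis by (meson ceq_sym ceq_trans)
  qed
  have "card {j. j < length rel \<and> ?P j} = 2 * card {j. j < ?k \<and> ?P j}"
    using card_double[of ?k ?P, OF per] st(1) by simp
  then show ?thesis using A B C same by simp
qed

end


context cox begin

lemma ncnt_parity: assumes "ceq w w'" shows "even (ncnt w r) = even (ncnt w' r)"
  using assms unfolding ceq_def cox_eq_def
proof (induction rule: rtrancl_induct)
  case base then show ?case by simp
next
  case (step y z)
  from step(2) have "even (ncnt y r) = even (ncnt z r)"
  proof
    assume "(y,z) \<in> cox_step m D"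
    then show ?thesis unfolding cox_step_def using ncnt_step by auto
  next
    assume "(y,z) \<in> (cox_step m D)\<inverse>"
    then show ?thesis unfolding cox_step_def using ncnt_step by auto
  qed
  then show ?case using step(3) by simp
qed

lemma ceq_refl_del0: assumes a: "a \<in> lists D" and x: "x \<in> D" and b: "b \<in> lists D"
  shows "ceq (reflw (a@[x]@b) (length a) @ (a@[x]@b)) (delw (length a) (a@[x]@b))"
proof -
  have r: "reflw (a@[x]@b) (length a) = a@[x]@rev a"
    using reflw_app2[of a "[x]@b" 0] by (simp add: reflw_def)
  have d: "delw (length a) (a@[x]@b) = a@b" by (simp add: delw_def)
  have "reflw (a@[x]@b) (length a) @ (a@[x]@b) = (a @ [x]) @ (rev a @ a) @ ([x] @ b)"
    using r by simp
  also have "ceq \<dots> ((a @ [x]) @ [] @ ([x] @ b))"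
    by (rule ceq_cong[OF ceq_inv'[OF a]]) (use a x b in auto)
  also have "(a @ [x]) @ [] @ ([x] @ b) = a @ [x,x] @ b" by simp
  also have "ceq \<dots> (a @ [] @ b)" by (rule ceq_cong[OF ceq_ss[OF x] a b])
  finally show ?thesis using d by simp
qed

lemma ceq_refl_del: assumes w: "w \<in> lists D" and i: "i < length w"
  shows "ceq (reflw w i @ w) (delw i w)"
proof -
  let ?a = "take i w" and ?x = "w!i" and ?b = "drop (Suc i) w"
  have wd: "w = ?a @ [?x] @ ?b" using id_take_nth_drop[OF i] by simp
  have a: "?a \<in> lists D" and x: "?x \<in> D" and b: "?b \<in> lists D"
    using w i by (auto simp: in_lists_conv_set dest: in_set_takeD in_set_dropD)
  have l: "length ?a = i" using i by simp
  show ?thesis using ceq_refl_del0[OF a x b] unfolding l wd[symmetric] .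
qed

lemma reflw_sq: "w \<in> lists D \<Longrightarrow> i < length w \<Longrightarrow> ceq (reflw w i @ reflw w i) []"
  using ceq_inv[OF reflw_lists, of w i] by simp

lemma delw_lists: "w \<in> lists X \<Longrightarrow> delw i w \<in> lists X"
  using set_delw[of i w] by (auto simp: in_lists_conv_set)

lemma ceq_del2:
  assumes w: "w \<in> lists D" and ij: "i < j" "j < length w" and e: "ceq (reflw w i) (reflw w j)"
  shows "ceq w (delw i (delw j w))"
proof -
  have ri: "reflw w i \<in> lists D" using reflw_lists[OF w] ij by simp
  have rj: "reflw w j \<in> lists D" using reflw_lists[OF w] ij by simp
  have dj: "delw j w \<in> lists D" using delw_lists[OF w] .
  have r1a: "reflw (delw j w) i = reflw (take j w) i"
    unfolding delw_def using reflw_app1[of i "take j w" "drop (Suc j) w"] ij by simp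
  have r1b: "reflw w i = reflw (take j w) i"
    using reflw_app1[of i "take j w" "drop j w"] ij by simp
  have r1: "reflw (delw j w) i = reflw w i" using r1a r1b by simp
  have "ceq (reflw w i @ reflw w j) (reflw w j @ reflw w j)" using ceq_cong_r[OF e rj] .
  also have "ceq \<dots> []" using reflw_sq[OF w] ij by simp
  finally have ij0: "ceq (reflw w i @ reflw w j) []" .
  have "ceq w ((reflw w i @ reflw w j) @ w)" using ceq_cong_r[OF ij0 w] by (simp add: ceq_sym)
  also have "(reflw w i @ reflw w j) @ w = reflw w i @ (reflw w j @ w)" by simp
  also have "ceq \<dots> (reflw w i @ delw j w)" using ceq_cong_l[OF ceq_refl_del[OF w ij(2)] ri] .
  also have "ceq \<dots> (delw i (delw j w))"
    using ceq_refl_del[OF dj, of i] r1 ij length_delw[of j w] by simp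
  finally show ?thesis .
qed

definition reduced :: "'a list \<Rightarrow> bool" where
  "reduced w \<longleftrightarrow> w \<in> lists D \<and> (\<forall>v. ceq w v \<longrightarrow> length w \<le> length v)"

definition drefl :: "'a list \<Rightarrow> bool" where
  "drefl w \<longleftrightarrow> (\<forall>i j. i < length w \<longrightarrow> j < length w \<longrightarrow> ceq (reflw w i) (reflw w j) \<longrightarrow> i = j)"

lemma reduced_drefl: assumes "reduced w" shows "drefl w"
  unfolding drefl_def
proof (intro allI impI)
  fix i j assume ij: "i < length w" "j < length w" "ceq (reflw w i) (reflw w j)"
  have w: "w \<in> lists D" using assms reduced_def by auto
  show "i = j"
  proof (rule ccontr)
    assume "i \<noteq> j"
    then consider "i < j" | "j < i" by linarith
    then obtain i' j' where "i' < j'" "j' < length w" "ceq (reflw w i') (reflw w j')"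
      using ij ceq_sym by metis
    then have "ceq w (delw i' (delw j' w))" using ceq_del2 w by blast
    moreover have "length (delw i' (delw j' w)) < length w"
      using \<open>i' < j'\<close> \<open>j' < length w\<close> length_delw[of j' w] length_delw[of i' "delw j' w"] by simp
    ultimately show False using assms reduced_def by force
  qed
qed

lemma ncnt_one: assumes "drefl w" "i < length w" shows "ncnt w (reflw w i) = 1"
proof -
  have "{j. j < length w \<and> ceq (reflw w j) (reflw w i)} = {i}"
    using assms unfolding drefl_def by auto
  then show ?thesis unfolding ncnt_def by simp
qed

lemma ij_order: fixes i j n :: nat assumes "i \<noteq> j" "i < n" "j < n" "ceq (f i) (f j)"
  obtains i' j' where "i' < j'" "j' < n" "ceq (f i') (f j')"
proof (cases "i < j")
  case True then show ?thesis using that assms by blast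
next
  case False then have "j < i" using assms by simp
  then show ?thesis using that[of j i] assms ceq_sym by blast
qed

lemma drefl_le: assumes w: "w \<in> lists D" and d: "drefl w" and e: "ceq w v"
  shows "length w \<le> length v"
proof -
  have ex: "\<exists>j. j < length v \<and> ceq (reflw v j) (reflw w i)" if i: "i < length w" for i
  proof -
    have "odd (ncnt v (reflw w i))" using ncnt_parity[OF e, of "reflw w i"] ncnt_one[OF d i] by simp
    then have "ncnt v (reflw w i) \<noteq> 0" by (metis even_zero)
    then have "{j. j < length v \<and> ceq (reflw v j) (reflw w i)} \<noteq> {}" unfolding ncnt_def by force
    then show ?thesis by auto
  qed
  define g where "g i = (SOME j. j < length v \<and> ceq (reflw v j) (reflw w i))" for i
  have g: "g i < length v \<and> ceq (reflw v (g i)) (reflw w i)" if "i < length w" for i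
    unfolding g_def using someI_ex[OF ex[OF that]] .
  have "inj_on g {..<length w}"
  proof (rule inj_onI)
    fix i j assume "i \<in> {..<length w}" "j \<in> {..<length w}" "g i = g j"
    then have "ceq (reflw w i) (reflw w j)" using g by (metis ceq_sym ceq_trans lessThan_iff)
    then show "i = j" using d \<open>i \<in> _\<close> \<open>j \<in> _\<close> unfolding drefl_def by auto
  qed
  moreover have "g ` {..<length w} \<subseteq> {..<length v}" using g by auto
  ultimately have "card {..<length w} \<le> card {..<length v}" by (meson card_inj_on_le finite_lessThan)
  then show ?thesis by simp
qed

lemma drefl_reduced: "w \<in> lists D \<Longrightarrow> drefl w \<Longrightarrow> reduced w"
  unfolding reduced_def using drefl_le[of w] by simp

lemma reduced_lists: "reduced w \<Longrightarrow> w \<in> lists D" unfolding reduced_def by simp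

lemma deletion: assumes "X \<subseteq> D" "w \<in> lists X" shows "\<exists>v \<in> lists X. reduced v \<and> ceq w v"
  using assms(2)
proof (induction "length w" arbitrary: w rule: less_induct)
  case less
  have wD: "w \<in> lists D" using less.prems assms(1) lists_mono by blast
  show ?case
  proof (cases "reduced w")
    case True then show ?thesis using less.prems ceq_refl by blast
  next
    case False
    then have "\<not> drefl w" using drefl_reduced[OF wD] by blast
    then obtain i j where ij: "i < length w" "j < length w" "ceq (reflw w i) (reflw w j)" "i \<noteq> j"
      unfolding drefl_def by blast
    then obtain i' j' where "i' < j'" "j' < length w" "ceq (reflw w i') (reflw w j')"
      using ij_order[of i j "length w" "reflw w"] by blast
    then have e: "ceq w (delw i' (delw j' w))" using ceq_del2[OF wD] by blast
    have l: "length (delw i' (delw j' w)) < length w"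
      using \<open>i' < j'\<close> \<open>j' < length w\<close> length_delw[of j' w] length_delw[of i' "delw j' w"] by simp
    have "delw i' (delw j' w) \<in> lists X" using delw_lists[OF delw_lists[OF less.prems]] by blast
    then obtain v where "v \<in> lists X" "reduced v" "ceq (delw i' (delw j' w)) v"
      using less.hyps[OF l] by blast
    then show ?thesis using e ceq_trans by blast
  qed
qed

definition Lw :: "'a list \<Rightarrow> nat" where
  "Lw w = (LEAST k. \<exists>v. ceq w v \<and> length v = k)"

lemma Lw_red: assumes "ceq w v" "reduced v" shows "Lw w = length v"
  unfolding Lw_def
proof (rule Least_equality)
  show "\<exists>v'. ceq w v' \<and> length v' = length v" using assms by blast
  fix k assume "\<exists>v'. ceq w v' \<and> length v' = k"
  then obtain v' where "ceq w v'" "length v' = k" by blast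
  then have "ceq v v'" using ceq_trans[OF ceq_sym[OF assms(1)]] by blast
  then show "length v \<le> k" using assms(2) \<open>length v' = k\<close> unfolding reduced_def by blast
qed

lemma reduced_Lw: "reduced w \<Longrightarrow> Lw w = length w" using Lw_red[of w w] by simp

lemma Lw_ex: assumes "X \<subseteq> D" "w \<in> lists X" shows "\<exists>v \<in> lists X. reduced v \<and> ceq w v \<and> length v = Lw w"
  using deletion[OF assms] Lw_red by fastforce

lemma Lw_exD: assumes "w \<in> lists D" shows "\<exists>v. reduced v \<and> ceq w v \<and> length v = Lw w"
  using Lw_ex[of D w] assms by blast

lemma Lw_le: "Lw w \<le> length w"
  unfolding Lw_def by (rule Least_le) (rule exI[of _ w], simp)

lemma Lw_ceq: assumes "ceq w v" shows "Lw w = Lw v"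
proof -
  have "\<And>x. ceq w x = ceq v x" using ceq_iff[OF assms] .
  then show ?thesis unfolding Lw_def by simp
qed

lemma Lw_parity: assumes "w \<in> lists D" shows "even (Lw w) = even (length w)"
proof -
  obtain v where "reduced v" "ceq w v" "length v = Lw w" using Lw_exD[OF assms] by blast
  then show ?thesis using ceq_parity[of w v] by simp
qed

lemma Lw_0: assumes "w \<in> lists D" "Lw w = 0" shows "ceq w []"
proof -
  obtain v where "reduced v" "ceq w v" "length v = Lw w" using Lw_exD[OF assms(1)] by blast
  then show ?thesis using assms(2) by simp
qed

lemma Lw_app: assumes "a \<in> lists D" "b \<in> lists D" shows "Lw (a@b) \<le> Lw a + Lw b"
proof -
  obtain a' where a': "reduced a'" "ceq a a'" "length a' = Lw a" using Lw_exD[OF assms(1)] by blast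
  obtain b' where b': "reduced b'" "ceq b b'" "length b' = Lw b" using Lw_exD[OF assms(2)] by blast
  have "ceq (a@b) (a'@b')" using ceq_app[OF a'(2) b'(2) assms] .
  then have "Lw (a@b) = Lw (a'@b')" using Lw_ceq by blast
  also have "\<dots> \<le> length (a'@b')" by (rule Lw_le)
  finally show ?thesis using a' b' by simp
qed

lemma Lw_rev: assumes "w \<in> lists D" shows "Lw (rev w) = Lw w"
proof -
  have *: "Lw (rev x) \<le> Lw x" if xD: "x \<in> lists D" for x
  proof -
    obtain v where "reduced v" "ceq x v" "length v = Lw x" using Lw_exD[OF xD] by blast
    then have "Lw (rev x) = Lw (rev v)" using Lw_ceq[OF ceq_rev] by blast
    also have "\<dots> \<le> length v" using Lw_le[of "rev v"] by simp
    finally show ?thesis using \<open>length v = Lw x\<close> by simp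
  qed
  have "rev w \<in> lists D" using assms by (simp add: in_lists_conv_set)
  then show ?thesis using *[OF assms] *[of "rev w"] by simp
qed

lemma nat_par_aux: fixes a b :: nat assumes "a \<le> Suc b" "b \<le> Suc a" "even a = even (b + 1)"
  shows "a = Suc b \<or> Suc a = b"
  using assms by presburger

lemma Lw_snoc: assumes w: "w \<in> lists D" and s: "s \<in> D"
  shows "Lw (w@[s]) = Suc (Lw w) \<or> Suc (Lw (w@[s])) = Lw w"
proof -
  have a: "Lw (w@[s]) \<le> Suc (Lw w)" using Lw_app[of w "[s]"] w s Lw_le[of "[s]"] by simp
  have "ceq w (w@[s]@[s])" using ceq_cong_l[OF ceq_ss[OF s] w] by (simp add: ceq_sym)
  then have "Lw w = Lw ((w@[s])@[s])" using Lw_ceq by simp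
  also have "\<dots> \<le> Lw (w@[s]) + Lw [s]" using Lw_app[of "w@[s]" "[s]"] w s by simp
  finally have b: "Lw w \<le> Suc (Lw (w@[s]))" using Lw_le[of "[s]"] by simp
  have "even (Lw (w@[s])) = even (Lw w + 1)" using Lw_parity[of "w@[s]"] Lw_parity[OF w] w s by simp
  then show ?thesis using nat_par_aux[OF a b] by blast
qed

lemma exchange: assumes w: "reduced w" and s: "s \<in> D" and nr: "\<not> reduced (w@[s])"
  shows "\<exists>i < length w. ceq (w@[s]) (delw i w)"
proof -
  let ?x = "w@[s]"
  have wD: "w \<in> lists D" using w reduced_def by simp
  have xD: "?x \<in> lists D" using wD s by simp
  have "\<not> drefl ?x" using drefl_reduced[OF xD] nr by blast
  then obtain i j where ij: "i < length ?x" "j < length ?x" "ceq (reflw ?x i) (reflw ?x j)" "i \<noteq> j"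
    unfolding drefl_def by blast
  then obtain i' j' where ij': "i' < j'" "j' < length ?x" "ceq (reflw ?x i') (reflw ?x j')"
    using ij_order[of i j "length ?x" "reflw ?x"] by blast
  have dw: "drefl w" using reduced_drefl[OF w] .
  have j': "j' = length w"
  proof (rule ccontr)
    assume "j' \<noteq> length w"
    then have "j' < length w" using ij' by simp
    moreover have "i' < length w" using \<open>j' < length w\<close> ij'(1) by simp
    ultimately have "ceq (reflw w i') (reflw w j')" using ij'(3) reflw_app1[of i' w "[s]"] reflw_app1[of j' w "[s]"] by simp
    then have "i' = j'" using dw \<open>i' < length w\<close> \<open>j' < length w\<close> unfolding drefl_def by blast
    then show False using ij'(1) by simp
  qed
  have i': "i' < length w" using ij' j' by simp
  have c1: "ceq (reflw ?x i' @ ?x) (reflw ?x j' @ ?x)" using ceq_cong_r[OF ij'(3) xD] .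
  have c2: "ceq (reflw ?x i' @ ?x) (delw i' ?x)" using ceq_refl_del[OF xD] i' by simp
  have c3: "ceq (reflw ?x j' @ ?x) (delw j' ?x)" using ceq_refl_del[OF xD] ij' by simp
  have c4: "delw i' ?x = delw i' w @ [s]" using i' unfolding delw_def by simp
  have c5: "delw j' ?x = w" using j' unfolding delw_def by simp
  have "ceq (delw i' w @ [s]) (reflw ?x i' @ ?x)" using ceq_sym[OF c2] c4 by simp
  also have "ceq \<dots> (reflw ?x j' @ ?x)" by (rule c1)
  also have "ceq \<dots> w" using c3 c5 by simp
  finally have e: "ceq (delw i' w @ [s]) w" .
  have dD: "delw i' w \<in> lists D" using delw_lists[OF wD] by blast
  have "ceq (w@[s]) ((delw i' w @ [s]) @ [s])" using ceq_cong_r[OF ceq_sym[OF e], of "[s]"] s by simp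
  also have "(delw i' w @ [s]) @ [s] = delw i' w @ [s,s] @ []" by simp
  also have "ceq \<dots> (delw i' w @ [] @ [])" by (rule ceq_cong[OF ceq_ss[OF s] dD]) simp
  finally show ?thesis using i' by auto
qed

end


lemma delw_app1: "i < length a \<Longrightarrow> delw i (a@b) = delw i a @ b"
  unfolding delw_def by simp

lemma delw_app2: "length a \<le> i \<Longrightarrow> delw i (a@b) = a @ delw (i - length a) b"
  unfolding delw_def by (simp add: Suc_diff_le)

context cox begin

lemma Lw_len_reduced: assumes "w \<in> lists D" "Lw w = length w" shows "reduced w"
  unfolding reduced_def
proof (intro conjI allI impI)
  show "w \<in> lists D" by fact
  fix v assume "ceq w v"
  then have "Lw w = Lw v" by (rule Lw_ceq)
  then show "length w \<le> length v" using assms(2) Lw_le[of v] by simp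
qed

lemma reduced_prefix: assumes "reduced (a@b)" shows "reduced a"
proof -
  have ab: "a \<in> lists D" "b \<in> lists D" using assms reduced_def by auto
  have "Lw a = length a"
  proof (rule ccontr)
    assume "Lw a \<noteq> length a"
    then have lt: "Lw a < length a" using Lw_le[of a] by simp
    obtain a' where a': "reduced a'" "ceq a a'" "length a' = Lw a" using Lw_exD[OF ab(1)] by blast
    have "ceq (a@b) (a'@b)" using ceq_cong_r[OF a'(2) ab(2)] .
    then have "length (a@b) \<le> length (a'@b)" using assms reduced_def by blast
    then show False using lt a'(3) by simp
  qed
  then show ?thesis using Lw_len_reduced ab by blast
qed

lemma Lw_single: "s \<in> D \<Longrightarrow> Lw [s] = 1"
  using Lw_le[of "[s]"] Lw_parity[of "[s]"] by (cases "Lw [s]") auto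

definition desc :: "'a list \<Rightarrow> 'a \<Rightarrow> bool" where
  "desc w s \<longleftrightarrow> Lw (w@[s]) < Lw w"

definition minc :: "'a set \<Rightarrow> 'a list \<Rightarrow> bool" where
  "minc J g \<longleftrightarrow> (\<forall>y \<in> lists J. Lw g \<le> Lw (g@y))"

lemma add_len_red:
  assumes J: "J \<subseteq> D" and g: "g \<in> lists D" and mg: "minc J g"
  shows "reduced z \<Longrightarrow> z \<in> lists J \<Longrightarrow> Lw (g@z) = Lw g + length z"
proof (induction z rule: rev_induct)
  case Nil then show ?case by simp
next
  case (snoc s z1)
  have z1r: "reduced z1" using reduced_prefix snoc.prems(1) by blast
  have z1J: "z1 \<in> lists J" and sJ: "s \<in> J" using snoc.prems(2) by auto
  have z1D: "z1 \<in> lists D" and sD: "s \<in> D" using z1J sJ J by auto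
  have IH: "Lw (g@z1) = Lw g + length z1" using snoc.IH z1r z1J by blast
  have gz1: "g @ z1 \<in> lists D" using g z1D by simp
  from Lw_snoc[OF gz1 sD]
  show ?case
  proof
    assume "Lw ((g@z1)@[s]) = Suc (Lw (g@z1))"
    then show ?thesis using IH by simp
  next
    assume dec: "Suc (Lw ((g@z1)@[s])) = Lw (g@z1)"
    obtain a where a: "reduced a" "ceq g a" "length a = Lw g" using Lw_exD[OF g] by blast
    have aD: "a \<in> lists D" using a reduced_def by simp
    have e1: "ceq (g@z1) (a@z1)" using ceq_cong_r[OF a(2) z1D] .
    have "Lw (a@z1) = length (a@z1)" using Lw_ceq[OF e1] IH a(3) by simp
    then have az1: "reduced (a@z1)" using Lw_len_reduced aD z1D by simp
    have e2: "ceq ((g@z1)@[s]) ((a@z1)@[s])" using ceq_cong_r[OF e1, of "[s]"] sD by simp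
    have "\<not> reduced ((a@z1)@[s])"
    proof
      assume "reduced ((a@z1)@[s])"
      then have "Lw ((a@z1)@[s]) = length (a@z1) + 1" using reduced_Lw by simp
      then show False using Lw_ceq[OF e2] dec IH a(3) by simp
    qed
    then obtain i where i: "i < length (a@z1)" "ceq ((a@z1)@[s]) (delw i (a@z1))"
      using exchange[OF az1 sD] by blast
    show ?thesis
    proof (cases "i < length a")
      case True
      let ?y = "z1 @ [s] @ rev z1"
      have yJ: "?y \<in> lists J" using z1J sJ by (auto simp: in_lists_conv_set)
      have yD: "rev z1 \<in> lists D" using z1D by (simp add: in_lists_conv_set)
      have dD: "delw i a \<in> lists D" using delw_lists[OF aD] .
      have "ceq (g @ ?y) (a @ ?y)" using ceq_cong_r[OF a(2)] yJ J by (meson lists_mono subsetD)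
      also have "a @ ?y = ((a@z1)@[s]) @ rev z1" by simp
      also have "ceq \<dots> (delw i (a@z1) @ rev z1)" using ceq_cong_r[OF i(2) yD] .
      also have "delw i (a@z1) @ rev z1 = delw i a @ (z1 @ rev z1) @ []" using delw_app1[OF True] by simp
      also have "ceq \<dots> (delw i a @ [] @ [])" by (rule ceq_cong[OF ceq_inv[OF z1D] dD]) simp
      finally have "ceq (g @ ?y) (delw i a)" by simp
      then have "Lw (g @ ?y) \<le> length (delw i a)" using Lw_ceq Lw_le by metis
      also have "\<dots> < Lw g" using length_delw[OF True] True a(3) by simp
      moreover have "Lw g \<le> Lw (g @ ?y)" using mg yJ unfolding minc_def by blast
      ultimately show ?thesis by simp
    next
      case False
      then have "ceq (a @ (z1@[s])) (a @ delw (i - length a) z1)" using i(2) delw_app2[of a i z1] by simp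
      then have "ceq (z1@[s]) (delw (i - length a) z1)" using ceq_cancel_l aD z1D sD by simp
      moreover have "length (delw (i - length a) z1) < length (z1@[s])"
        using length_delw[of "i - length a" z1] i(1) False by simp
      ultimately show ?thesis using snoc.prems(1) unfolding reduced_def by fastforce
    qed
  qed
qed

lemma add_len:
  assumes J: "J \<subseteq> D" and g: "g \<in> lists D" and mg: "minc J g" and z: "z \<in> lists J"
  shows "Lw (g@z) = Lw g + Lw z"
proof -
  obtain z' where z': "z' \<in> lists J" "reduced z'" "ceq z z'" "length z' = Lw z" using Lw_ex[OF J z] by blast
  have "ceq (g@z) (g@z')" using ceq_cong_l[OF z'(3) g] .
  then have "Lw (g@z) = Lw (g@z')" by (rule Lw_ceq)
  also have "\<dots> = Lw g + length z'" using add_len_red[OF J g mg z'(2) z'(1)] .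
  finally show ?thesis using z'(4) by simp
qed

lemma minc_exists: assumes J: "J \<subseteq> D" and g: "g \<in> lists D" shows "\<exists>y \<in> lists J. minc J (g@y)"
proof -
  let ?P = "\<lambda>k. \<exists>y \<in> lists J. Lw (g@y) = k"
  have ex: "?P (Lw g)" by (rule bexI[of _ "[]"]) auto
  obtain y where y: "y \<in> lists J" "Lw (g@y) = (LEAST k. ?P k)" using LeastI_ex[of ?P] ex by blast
  have "minc J (g@y)" unfolding minc_def
  proof
    fix y' assume "y' \<in> lists J"
    then have "?P (Lw (g@(y@y')))" using y(1) by (intro bexI[of _ "y@y'"]) auto
    then have "(LEAST k. ?P k) \<le> Lw (g@(y@y'))" by (rule Least_le)
    then show "Lw (g@y) \<le> Lw ((g@y)@y')" using y(2) by simp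
  qed
  then show ?thesis using y(1) by blast
qed

lemma decomp: assumes J: "J \<subseteq> X" "X \<subseteq> D" and g: "g \<in> lists X"
  shows "\<exists>g0 z. g0 \<in> lists X \<and> minc J g0 \<and> z \<in> lists J \<and> ceq g (g0@z)"
proof -
  have gD: "g \<in> lists D" using g J by (meson lists_mono subsetD)
  obtain y where y: "y \<in> lists J" "minc J (g@y)" using minc_exists[OF _ gD] J by blast
  have yD: "y \<in> lists D" using y J by (meson lists_mono subsetD order_trans)
  have "ceq (g @ y @ rev y) (g @ [])" using ceq_cong_l[OF ceq_inv[OF yD] gD] .
  then have "ceq g ((g@y) @ rev y)" by (simp add: ceq_sym)
  moreover have "g@y \<in> lists X" using g y J by (auto simp: in_lists_conv_set)
  moreover have "rev y \<in> lists J" using y by (simp add: in_lists_conv_set)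
  ultimately show ?thesis using y by blast
qed

lemma minc_ceq: assumes J: "J \<subseteq> D" and e: "ceq g g'" and mg: "minc J g" shows "minc J g'"
  unfolding minc_def
proof
  fix y assume y: "y \<in> lists J"
  then have yD: "y \<in> lists D" using J by (meson lists_mono subsetD)
  have "Lw g' = Lw g" using Lw_ceq[OF e] by simp
  also have "\<dots> \<le> Lw (g@y)" using mg y minc_def by blast
  also have "\<dots> = Lw (g'@y)" using Lw_ceq[OF ceq_cong_r[OF e yD]] .
  finally show "Lw g' \<le> Lw (g'@y)" .
qed

lemma nodesc_minc:
  assumes J: "J \<subseteq> D" and g: "g \<in> lists D" and nd: "\<forall>s\<in>J. \<not> desc g s"
  shows "minc J g"
proof -
  obtain g0 z where d: "g0 \<in> lists D" "minc J g0" "z \<in> lists J" "ceq g (g0@z)"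
    using decomp[of J D g] J g by blast
  obtain z' where z': "z' \<in> lists J" "reduced z'" "ceq z z'" "length z' = Lw z" using Lw_ex[OF J d(3)] by blast
  have zD: "z' \<in> lists D" using z' reduced_def by simp
  have e: "ceq g (g0@z')" using ceq_trans[OF d(4) ceq_cong_l[OF z'(3) d(1)]] .
  show ?thesis
  proof (cases z' rule: rev_exhaust)
    case Nil
    then have "ceq g0 g" using ceq_sym[OF e] by simp
    then show ?thesis using minc_ceq[OF J _ d(2)] by blast
  next
    case (snoc z1 s)
    have sJ: "s \<in> J" and z1J: "z1 \<in> lists J" using z'(1) snoc by auto
    have sD: "s \<in> D" using sJ J by auto
    have z1D: "z1 \<in> lists D" using z1J J by (meson lists_mono subsetD)
    have "ceq (g@[s]) ((g0@z1@[s])@[s])" using ceq_cong_r[OF e, of "[s]"] sD snoc by simp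
    also have "(g0@z1@[s])@[s] = (g0@z1) @ [s,s] @ []" by simp
    also have "ceq \<dots> ((g0@z1) @ [] @ [])" by (rule ceq_cong[OF ceq_ss[OF sD]]) (use d(1) z1D in auto)
    finally have e2: "ceq (g@[s]) (g0@z1)" by simp
    have "Lw (g@[s]) = Lw (g0@z1)" using Lw_ceq[OF e2] .
    also have "\<dots> = Lw g0 + Lw z1" using add_len[OF J d(1) d(2) z1J] .
    also have "\<dots> < Lw g0 + length z'" using Lw_le[of z1] snoc by simp
    also have "\<dots> = Lw (g0@z')" using add_len[OF J d(1) d(2) z'(1)] z'(4) Lw_ceq[OF z'(3)] by simp
    also have "\<dots> = Lw g" using Lw_ceq[OF e] by simp
    finally have "desc g s" unfolding desc_def .
    then show ?thesis using nd sJ by blast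
  qed
qed

lemma minc_nodesc: "minc J g \<Longrightarrow> s \<in> J \<Longrightarrow> \<not> desc g s"
  unfolding minc_def desc_def by (metis Cons_in_lists_iff lists.Nil not_le)

lemma decomp_unique:
  assumes J: "J \<subseteq> D" and u: "u \<in> lists D" "minc J u" and u': "u' \<in> lists D" "minc J u'"
    and v: "v \<in> lists J" and v': "v' \<in> lists J" and e: "ceq (u@v) (u'@v')"
  shows "ceq u u'"
proof -
  have vD: "v \<in> lists D" and v'D: "v' \<in> lists D" using v v' J by (meson lists_mono subsetD)+
  have gen: "ceq b (a @ (x @ rev y))" if "a \<in> lists D" "b \<in> lists D" "x \<in> lists D" "y \<in> lists D" "ceq (a@x) (b@y)"
    for a b x y
  proof -
    have "ceq b (b @ y @ rev y)" using ceq_cong_l[OF ceq_inv[OF that(4)] that(2)] by (simp add: ceq_sym)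
    also have "b @ y @ rev y = (b @ y) @ rev y" by simp
    also have "ceq \<dots> ((a @ x) @ rev y)" using ceq_cong_r[OF ceq_sym[OF that(5)]] that(4) by (simp add: in_lists_conv_set)
    finally show ?thesis by simp
  qed
  have e1: "ceq u' (u @ (v @ rev v'))" using gen[OF u(1) u'(1) vD v'D e] .
  have e2: "ceq u (u' @ (v' @ rev v))" using gen[OF u'(1) u(1) v'D vD ceq_sym[OF e]] .
  have y1: "v @ rev v' \<in> lists J" and y2: "v' @ rev v \<in> lists J" using v v' by (auto simp: in_lists_conv_set)
  have "Lw u' = Lw u + Lw (v @ rev v')" using Lw_ceq[OF e1] add_len[OF J u y1] by simp
  moreover have "Lw u = Lw u' + Lw (v' @ rev v)" using Lw_ceq[OF e2] add_len[OF J u' y2] by simp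
  ultimately have "Lw (v @ rev v') = 0" by simp
  moreover have "v @ rev v' \<in> lists D" using vD v'D by (auto simp add: in_lists_conv_set)
  ultimately have "ceq (v @ rev v') []" using Lw_0 by blast
  then have "ceq (u @ (v @ rev v')) (u @ [])" using ceq_cong_l u(1) by blast
  then show ?thesis using ceq_trans[OF e1] ceq_sym by simp
qed

end


lemma nth_delw1: "j < i \<Longrightarrow> i < length a \<Longrightarrow> delw i a ! j = a ! j"
  unfolding delw_def by (simp add: nth_append)

lemma nth_delw2: "i \<le> j \<Longrightarrow> Suc j < length a \<Longrightarrow> delw i a ! j = a ! Suc j"
  unfolding delw_def by (simp add: nth_append)

context cox begin

lemma cox_elem_ceq: "cox_elem m D w = {v. ceq w v}"
  unfolding cox_elem_def ceq_def by simp

lemma cox_elem_eq: "ceq w v \<Longrightarrow> cox_elem m D w = cox_elem m D v"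
  unfolding cox_elem_ceq using ceq_iff by blast

lemma noadj: assumes a: "reduced a" and i: "Suc i < length a" shows "a!i \<noteq> a!Suc i"
proof
  assume eq: "a!i = a!Suc i"
  have aD: "a \<in> lists D" using a reduced_def by simp
  let ?x = "a!i"
  have xD: "?x \<in> D" using aD i by (simp add: in_lists_conv_set)
  have "a = take i a @ [a!i] @ drop (Suc i) a" using id_take_nth_drop[of i a] i by simp
  also have "drop (Suc i) a = a!Suc i # drop (Suc (Suc i)) a" using Cons_nth_drop_Suc[OF i] by simp
  finally have ad: "a = take i a @ [?x,?x] @ drop (Suc (Suc i)) a" using eq by simp
  have tD: "take i a \<in> lists D" "drop (Suc (Suc i)) a \<in> lists D" using aD
    by (auto simp: in_lists_conv_set dest: in_set_takeD in_set_dropD)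
  have "ceq (take i a @ [?x,?x] @ drop (Suc (Suc i)) a) (take i a @ [] @ drop (Suc (Suc i)) a)"
    by (rule ceq_cong[OF ceq_ss[OF xD] tD])
  then have "ceq a (take i a @ drop (Suc (Suc i)) a)" using ad by simp
  moreover have "length (take i a @ drop (Suc (Suc i)) a) < length a" using i by simp
  ultimately show False using a reduced_def by fastforce
qed

lemma dihedral:
  assumes sD: "s \<in> D" and rD: "r \<in> D" and q: "q \<in> lists {s,r}" and ds: "desc q s" and dr: "desc q r"
  shows "Lw (r#q) < Lw q"
proof -
  have J: "{s,r} \<subseteq> D" using sD rD by simp
  obtain a where a: "a \<in> lists {s,r}" "reduced a" "ceq q a" "length a = Lw q" using Lw_ex[OF J q] by blast
  have aD: "a \<in> lists D" using a reduced_def by simp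
  have qD: "q \<in> lists D" using q J by (meson lists_mono subsetD)
  have pos: "0 < Lw q" using ds unfolding desc_def by simp
  then have ane: "a \<noteq> []" using a by auto
  have aset: "\<And>k. k < length a \<Longrightarrow> a!k \<in> {s,r}" using a(1) by (auto simp: in_lists_conv_set)
  have e0: "Lw (r#q) = Lw (r#a)" using Lw_ceq[OF ceq_cong_l[OF a(3), of "[r]"]] rD by simp
  obtain x0 a1 where a01: "a = x0 # a1" using ane by (cases a) auto
  have a1D: "a1 \<in> lists D" using aD a01 by simp
  have x0D: "x0 \<in> D" using aD a01 by simp
  have fin: "Lw (r#a) < length a"
  proof (cases "x0 = r")
    case True
    have "ceq ([] @ [r,r] @ a1) ([] @ [] @ a1)" by (rule ceq_cong[OF ceq_ss[OF rD]]) (use a1D in auto)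
    then have "Lw (r#a) = Lw a1" using Lw_ceq a01 True by simp
    then show ?thesis using Lw_le[of a1] a01 by simp
  next
    case False
    then have x0s: "x0 = s" using aset[of 0] a01 by auto
    have sr: "s \<noteq> r" using False x0s by simp
    define e where "e = last a"
    define ot where "ot = (if e = s then r else s)"
    have eset: "e \<in> {s,r}" using aset[of "length a - 1"] ane unfolding e_def by (simp add: last_conv_nth)
    have oset: "ot \<in> {s,r}" "ot \<noteq> e" "ot \<in> D" using eset sr sD rD unfolding ot_def by auto
    have "desc q ot" using ds dr ot_def by simp
    then have lo: "Lw (a@[ot]) < length a" using Lw_ceq[OF ceq_cong_r[OF a(3), of "[ot]"]] oset a(4)
      unfolding desc_def by simp
    have la: "Lw a = length a" using reduced_Lw[OF a(2)] .
    have lo2: "Suc (Lw (a@[ot])) = length a" using Lw_snoc[OF aD oset(3)] la lo by simp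
    have "\<not> reduced (a@[ot])" using reduced_Lw[of "a@[ot]"] lo by auto
    then obtain i where i: "i < length a" "ceq (a@[ot]) (delw i a)" using exchange[OF a(2) oset(3)] by blast
    have dD: "delw i a \<in> lists D" using delw_lists[OF aD] .
    have ld: "length (delw i a) = length a - 1" using length_delw[OF i(1)] .
    have dred: "reduced (delw i a)" using Lw_len_reduced[OF dD] Lw_ceq[OF i(2)] lo2 ld by simp
    show ?thesis
    proof (cases "i = length a - 1")
      case True
      have db: "delw i a = butlast a" using True i unfolding delw_def by (simp add: butlast_conv_take)
      have ab: "a = butlast a @ [e]" using ane unfolding e_def by simp
      have bD: "butlast a \<in> lists D" using aD by (auto simp: in_lists_conv_set dest: in_set_butlastD)
      have eD: "e \<in> D" using eset sD rD by auto
      have "butlast a @ ([e] @ [ot]) = (butlast a @ [e]) @ [ot]" by simp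
      also have "\<dots> = a @ [ot]" using ab[symmetric] by simp
      finally have eqb: "butlast a @ ([e] @ [ot]) = a @ [ot]" .
      have "ceq (butlast a @ ([e] @ [ot])) (butlast a @ [])" unfolding eqb append_Nil2 using i(2) db by simp
      then have eo: "ceq [e,ot] []" using ceq_cancel_l[OF _ bD] eD oset(3) by simp
      have "ceq [e] ([e] @ [ot,ot])" using ceq_cong_l[OF ceq_ss[OF oset(3)], of "[e]"] eD by (simp add: ceq_sym)
      also have "[e] @ [ot,ot] = [e,ot] @ [ot]" by simp
      also have "ceq \<dots> ([] @ [ot])" using ceq_cong_r[OF eo, of "[ot]"] oset(3) by simp
      finally have "ceq [e] [ot]" by simp
      then have rs: "ceq [r] [s]"
      proof (cases "e = s")
        case True then show ?thesis using \<open>ceq [e] [ot]\<close> sr ceq_sym[of "[e]" "[ot]"] unfolding ot_def by simp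
      next
        case False then have "e = r" using eset by simp
        then show ?thesis using \<open>ceq [e] [ot]\<close> sr unfolding ot_def by simp
      qed
      have "ceq (r#a) ([s] @ a)" using ceq_cong_r[OF rs aD] by simp
      also have "[s] @ a = [] @ [s,s] @ a1" using a01 x0s by simp
      also have "ceq \<dots> ([] @ [] @ a1)" by (rule ceq_cong[OF ceq_ss[OF sD]]) (use a1D in auto)
      finally have "Lw (r#a) = Lw a1" using Lw_ceq by simp
      then show ?thesis using Lw_le[of a1] a01 by simp
    next
      case False
      note nl = False
      show ?thesis
      proof (cases "i = 0")
        case True
        have len2: "2 \<le> length a" using nl True i by simp
        have dt: "delw i a = a1" using True a01 unfolding delw_def by simp
        have "ceq a (a @ [ot,ot])" using ceq_cong_l[OF ceq_ss[OF oset(3)] aD] by (simp add: ceq_sym)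
        also have "a @ [ot,ot] = (a@[ot]) @ [ot]" by simp
        also have "ceq \<dots> (a1 @ [ot])" using ceq_cong_r[OF i(2), of "[ot]"] dt oset(3) by simp
        finally have aa: "ceq a (a1 @ [ot])" .
        have "a!1 \<noteq> a!0" using noadj[OF a(2), of 0] len2 by simp
        then have a11: "a!1 = r" using aset[of 1] len2 a01 x0s by (cases a1) auto
        obtain y1 a2 where a12: "a1 = y1 # a2" using len2 a01 by (cases a1) auto
        have y1r: "y1 = r" using a11 a01 a12 by simp
        have a2D: "a2 \<in> lists D" using a1D a12 by simp
        have "ceq (r#a) ([r] @ (a1 @ [ot]))" using ceq_cong_l[OF aa, of "[r]"] rD by simp
        also have "[r] @ (a1 @ [ot]) = [] @ [r,r] @ (a2 @ [ot])" using a12 y1r by simp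
        also have "ceq \<dots> ([] @ [] @ (a2 @ [ot]))" by (rule ceq_cong[OF ceq_ss[OF rD]]) (use a2D oset in auto)
        finally have "Lw (r#a) = Lw (a2 @ [ot])" using Lw_ceq by simp
        then have "Lw (r#a) \<le> length (a2 @ [ot])" using Lw_le[of "a2 @ [ot]"] by simp
        then show ?thesis using a01 a12 by simp
      next
        case False
        have i1: "Suc (i - 1) < length (delw i a)" using False nl i ld by simp
        have "delw i a ! (i-1) \<noteq> delw i a ! Suc (i-1)" using noadj[OF dred i1] .
        moreover have "delw i a ! (i-1) = a!(i-1)" using nth_delw1[of "i-1" i a] False i by simp
        moreover have "delw i a ! Suc (i-1) = a ! Suc i" using nth_delw2[of i i a] False nl i by simp
        moreover have "a!(i-1) \<noteq> a!i" using noadj[OF a(2), of "i-1"] False i by simp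
        moreover have "a!i \<noteq> a!Suc i" using noadj[OF a(2), of i] False nl i by simp
        moreover have "a!(i-1) \<in> {s,r}" "a!i \<in> {s,r}" "a!Suc i \<in> {s,r}"
          using aset False nl i by auto
        ultimately show ?thesis by auto
      qed
    qed
  qed
  then show ?thesis using e0 a(4) by simp
qed

end


context cox begin

lemma top_good_step:
  assumes X: "X \<subseteq> D" and u: "u \<in> lists X" and all: "\<forall>s\<in>X. desc u s"
    and IH: "\<forall>w\<in>lists X. Lw w \<le> n \<longrightarrow> Lw (u@w) + Lw w = Lw u"
    and w: "reduced w" "w \<in> lists X" "length w = n" and r: "r \<in> X"
    and wr: "reduced (w@[r])"
  shows "Lw (u@(w@[r])) + Suc n = Lw u"
proof -
  have uD: "u \<in> lists D" using u X by (meson lists_mono subsetD)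
  have wD: "w \<in> lists D" using w reduced_def by simp
  have rD: "r \<in> D" using r X by auto
  have lw: "Lw w = n" using reduced_Lw[OF w(1)] w(3) by simp
  have lwr: "Lw (w@[r]) = Suc n" using reduced_Lw[OF wr] w(3) by simp
  have IH': "\<And>w. w \<in> lists X \<Longrightarrow> Lw w \<le> n \<Longrightarrow> Lw (u@w) + Lw w = Lw u" using IH by blast
  have gw: "Lw (u@w) + n = Lw u" using IH'[OF w(2)] lw by simp
  have uwD: "u@w \<in> lists D" using uD wD by simp
  from Lw_snoc[OF uwD rD] show ?thesis
  proof
    assume "Suc (Lw ((u@w)@[r])) = Lw (u@w)"
    then show ?thesis using gw by simp
  next
    assume up: "Lw ((u@w)@[r]) = Suc (Lw (u@w))"
    have wne: "w \<noteq> []"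
    proof
      assume "w = []"
      then have "Lw (u@[r]) = Suc (Lw u)" using up by simp
      then show False using all r unfolding desc_def by auto
    qed
    then obtain w1 s where ws: "w = w1@[s]" by (cases w rule: rev_exhaust) auto
    have sX: "s \<in> X" and w1X: "w1 \<in> lists X" using w(2) ws by auto
    have sD: "s \<in> D" using sX X by auto
    have w1r: "reduced w1" using reduced_prefix w(1) ws by blast
    have w1D: "w1 \<in> lists D" using w1r reduced_def by simp
    have lw1: "Lw w1 = length w1" using reduced_Lw[OF w1r] .
    have nw1: "n = Suc (length w1)" using w(3) ws by simp
    have gw1: "Lw (u@w1) + length w1 = Lw u" using IH'[OF w1X] lw1 nw1 by simp
    have ews: "ceq ((u@w)@[s]) ((u@w1) @ [] @ [])"
      using ceq_cong[OF ceq_ss[OF sD], of "u@w1" "[]"] uD w1D ws by simp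
    have ews': "ceq (w@[s]) (w1 @ [] @ [])"
      using ceq_cong[OF ceq_ss[OF sD], of "w1" "[]"] w1D ws by simp
    have ups: "Lw ((u@w)@[s]) = Suc (Lw (u@w))" using Lw_ceq[OF ews] gw gw1 nw1 by simp
    define J where "J = {s, r}"
    have JX: "J \<subseteq> X" using sX r J_def by simp
    have JD: "J \<subseteq> D" using JX X by simp
    have nd: "\<forall>x\<in>J. \<not> desc (u@w) x" using up ups unfolding desc_def J_def by auto
    have my: "minc J (u@w)" using nodesc_minc[OF JD uwD nd] .
    obtain w0 z where dc: "w0 \<in> lists X" "minc J w0" "z \<in> lists J" "ceq w (w0@z)"
      using decomp[OF JX X w(2)] by blast
    have w0D: "w0 \<in> lists D" using dc(1) X by (meson lists_mono subsetD)
    have zD: "z \<in> lists D" using dc(3) JD by (meson lists_mono subsetD)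
    have lwz: "Lw w = Lw w0 + Lw z" using Lw_ceq[OF dc(4)] add_len[OF JD w0D dc(2) dc(3)] by simp
    have dws: "desc w s" unfolding desc_def using Lw_ceq[OF ews'] lw1 lw nw1 by simp
    have z0: "Lw z \<noteq> 0"
    proof
      assume "Lw z = 0"
      then have "ceq z []" using Lw_0 zD by blast
      then have "ceq (w0@z) (w0@[])" using ceq_cong_l w0D by blast
      then have "ceq w0 w" using ceq_trans[OF dc(4)] ceq_sym by simp
      then have "minc J w" using minc_ceq[OF JD _ dc(2)] by blast
      then show False using minc_nodesc dws J_def by blast
    qed
    have lw0: "Lw w0 < n" using lwz z0 lw by simp
    have gw0: "Lw (u@w0) + Lw w0 = Lw u" using IH'[OF dc(1)] lw0 by simp
    have rzD: "rev z \<in> lists D" "rev z \<in> lists J" using zD dc(3) by (auto simp: in_lists_conv_set)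
    have e1: "ceq (u@w0) ((u@w) @ rev z)"
    proof -
      have "ceq ((u@w) @ rev z) ((u@(w0@z)) @ rev z)"
        using ceq_cong[OF dc(4), of u "rev z"] uD rzD by simp
      also have "(u@(w0@z)) @ rev z = (u@w0) @ (z @ rev z) @ []" by simp
      also have "ceq \<dots> ((u@w0) @ [] @ [])" by (rule ceq_cong[OF ceq_inv[OF zD]]) (use uD w0D in auto)
      finally show ?thesis using ceq_sym by simp
    qed
    have dz: "desc (rev z) x" if xJ: "x \<in> J" for x
    proof -
      have xD: "x \<in> D" using xJ JD by auto
      have l1: "Lw (w0@[x]) = Lw w0 + 1" using add_len[OF JD w0D dc(2), of "[x]"] xJ Lw_single[OF xD] by simp
      have w0xX: "w0@[x] \<in> lists X" using dc(1) xJ JX by auto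
      have gx: "Lw (u@(w0@[x])) + Lw w0 + 1 = Lw u" using IH'[OF w0xX] l1 lw0 by simp
      have e2: "ceq (u@w0@[x]) ((u@w) @ (rev z @ [x]))" using ceq_cong_r[OF e1, of "[x]"] xD by simp
      have rzx: "rev z @ [x] \<in> lists J" using rzD(2) xJ by simp
      have a1: "Lw ((u@w) @ rev z) = Lw (u@w) + Lw (rev z)" using add_len[OF JD uwD my rzD(2)] .
      have a2: "Lw ((u@w) @ (rev z @ [x])) = Lw (u@w) + Lw (rev z @ [x])" using add_len[OF JD uwD my rzx] .
      have "Lw (rev z @ [x]) + 1 = Lw (rev z)"
        using Lw_ceq[OF e1] Lw_ceq[OF e2] a1 a2 gx gw0 by simp
      then show ?thesis unfolding desc_def by simp
    qed
    have rzsr: "rev z \<in> lists {s,r}" using rzD(2) J_def by simp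
    have dih: "Lw (r # rev z) < Lw (rev z)"
      using dihedral[OF sD rD rzsr] dz J_def by simp
    have "Lw (z@[r]) = Lw (rev (z@[r]))" using Lw_rev[of "z@[r]"] zD rD by simp
    also have "\<dots> = Lw (r # rev z)" by simp
    also have "\<dots> < Lw (rev z)" by (rule dih)
    also have "\<dots> = Lw z" using Lw_rev[OF zD] .
    finally have lzr: "Lw (z@[r]) < Lw z" .
    have "ceq (w@[r]) (w0@(z@[r]))" using ceq_cong_r[OF dc(4), of "[r]"] rD by simp
    then have "Lw (w@[r]) = Lw w0 + Lw (z@[r])"
      using Lw_ceq add_len[OF JD w0D dc(2), of "z@[r]"] dc(3) J_def by simp
    then show ?thesis using lzr lwz lw lwr by simp
  qed
qed

lemma top_good:
  assumes X: "X \<subseteq> D" and u: "u \<in> lists X" and all: "\<forall>s\<in>X. desc u s"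
  shows "\<forall>w\<in>lists X. Lw w \<le> n \<longrightarrow> Lw (u@w) + Lw w = Lw u"
proof (induction n)
  case 0
  show ?case
  proof (intro ballI impI)
    fix w assume w: "w \<in> lists X" "Lw w \<le> 0"
    have wD: "w \<in> lists D" using w X by (meson lists_mono subsetD)
    have uD: "u \<in> lists D" using u X by (meson lists_mono subsetD)
    have "ceq w []" using Lw_0 wD w by simp
    then have "ceq (u@w) (u@[])" using ceq_cong_l uD by blast
    then show "Lw (u@w) + Lw w = Lw u" using Lw_ceq w by simp
  qed
next
  case (Suc n)
  show ?case
  proof (intro ballI impI)
    fix w' assume w': "w' \<in> lists X" "Lw w' \<le> Suc n"
    show "Lw (u@w') + Lw w' = Lw u"
    proof (cases "Lw w' \<le> n")
      case True then show ?thesis using Suc w' by blast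
    next
      case False
      then have lw': "Lw w' = Suc n" using w' by simp
      obtain v where v: "v \<in> lists X" "reduced v" "ceq w' v" "length v = Lw w'"
        using Lw_ex[OF X w'(1)] by blast
      obtain w r where vw: "v = w@[r]" using v(4) lw' by (cases v rule: rev_exhaust) auto
      have wr: "reduced w" using reduced_prefix v(2) vw by blast
      have wX: "w \<in> lists X" and rX: "r \<in> X" using v(1) vw by auto
      have "Lw (u@(w@[r])) + Suc n = Lw u"
        using top_good_step[OF X u all Suc wr wX _ rX] v vw lw' by simp
      moreover have "ceq (u@w') (u@(w@[r]))" using ceq_cong_l[OF v(3)] u X vw
        by (meson lists_mono subsetD)
      ultimately show ?thesis using Lw_ceq lw' by simp
    qed
  qed
qed

lemma top_finite:
  assumes X: "X \<subseteq> D" and u: "u \<in> lists X" and all: "\<forall>s\<in>X. desc u s"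
  shows "finite (special m D X)"
proof -
  have fX: "finite X" using X finD finite_subset by blast
  have "special m D X \<subseteq> cox_elem m D ` {xs. set xs \<subseteq> X \<and> length xs \<le> Lw u}"
  proof
    fix g assume "g \<in> special m D X"
    then obtain w where w: "w \<in> lists X" "g = cox_elem m D w" unfolding special_def by blast
    obtain v where v: "v \<in> lists X" "reduced v" "ceq w v" "length v = Lw w" using Lw_ex[OF X w(1)] by blast
    have "Lw (u@w) + Lw w = Lw u" using top_good[OF X u all, of "Lw w"] w(1) by blast
    then have "length v \<le> Lw u" using v(4) by simp
    moreover have "g = cox_elem m D v" using w(2) cox_elem_eq[OF v(3)] by simp
    ultimately show "g \<in> cox_elem m D ` {xs. set xs \<subseteq> X \<and> length xs \<le> Lw u}"
      using v(1) by (auto simp: in_lists_conv_set)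
  qed
  moreover have "finite (cox_elem m D ` {xs. set xs \<subseteq> X \<and> length xs \<le> Lw u})"
    using finite_lists_length_le[OF fX] by blast
  ultimately show ?thesis using finite_subset by blast
qed

end


context cox begin

abbreviation cls :: "'a list \<Rightarrow> 'a list set" where "cls \<equiv> cox_elem m D"

lemma cls_eq_iff: "cls w = cls v \<longleftrightarrow> ceq w v"
proof
  assume "cls w = cls v"
  then have "w \<in> cls v" unfolding cox_elem_ceq using ceq_refl by blast
  then show "ceq w v" unfolding cox_elem_ceq using ceq_sym by blast
qed (rule cox_elem_eq)

lemma wl_cls: "word_length (cls w) = Lw w"
  unfolding word_length_def Lw_def cox_elem_ceq by simp

definition cmul :: "'a list set \<Rightarrow> 'a list set \<Rightarrow> 'a list set" where
  "cmul g h = {x. \<exists>u\<in>g. \<exists>v\<in>h. ceq (u@v) x}"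

lemma cmul_cls: assumes "u0 \<in> lists D" "v0 \<in> lists D" shows "cmul (cls u0) (cls v0) = cls (u0@v0)"
proof (rule set_eqI, rule iffI)
  fix x assume "x \<in> cmul (cls u0) (cls v0)"
  then obtain u v where uv: "ceq u0 u" "ceq v0 v" "ceq (u@v) x" unfolding cmul_def cox_elem_ceq by blast
  have "ceq (u0@v0) (u@v)" using ceq_app[OF uv(1,2) assms] .
  then have "ceq (u0@v0) x" using ceq_trans uv(3) by blast
  then show "x \<in> cls (u0@v0)" unfolding cox_elem_ceq by simp
next
  fix x assume "x \<in> cls (u0@v0)"
  then have "ceq (u0@v0) x" unfolding cox_elem_ceq by simp
  then show "x \<in> cmul (cls u0) (cls v0)" unfolding cmul_def cox_elem_ceq
    by (intro CollectI bexI[of _ u0] bexI[of _ v0]) auto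
qed

definition nodg :: "'a set \<Rightarrow> 'a list set \<Rightarrow> bool" where
  "nodg Y g \<longleftrightarrow> (\<exists>w\<in>lists D. g = cls w \<and> (\<forall>s\<in>Y. \<not> desc w s))"

lemma desc_ceq: assumes "ceq w w'" "s \<in> D" shows "desc w s = desc w' s"
proof -
  have "Lw (w@[s]) = Lw (w'@[s])" using Lw_ceq[OF ceq_cong_r[OF assms(1)]] assms(2) by simp
  then show ?thesis unfolding desc_def using Lw_ceq[OF assms(1)] by simp
qed

lemma nodg_cls: assumes "w \<in> lists D" "Y \<subseteq> D" shows "nodg Y (cls w) \<longleftrightarrow> (\<forall>s\<in>Y. \<not> desc w s)"
proof
  assume "nodg Y (cls w)"
  then obtain w' where w': "w' \<in> lists D" "cls w = cls w'" "\<forall>s\<in>Y. \<not> desc w' s" unfolding nodg_def by blast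
  have "ceq w w'" using w'(2) cls_eq_iff by blast
  then show "\<forall>s\<in>Y. \<not> desc w s" using w'(3) desc_ceq[of w w'] assms(2) by blast
next
  assume "\<forall>s\<in>Y. \<not> desc w s"
  then show "nodg Y (cls w)" unfolding nodg_def using assms(1) by blast
qed

definition Cn :: "'a set \<Rightarrow> nat \<Rightarrow> 'a list set set" where
  "Cn X n = {g \<in> special m D X. word_length g = n}"

definition PX :: "'a set \<Rightarrow> real fps" where
  "PX X = Abs_fps (\<lambda>n. real (card (Cn X n)))"

definition QX :: "'a set \<Rightarrow> 'a set \<Rightarrow> real fps" where
  "QX X Y = Abs_fps (\<lambda>n. real (card {g \<in> Cn X n. nodg Y g}))"

lemma poincare_PX: "poincare m D = PX D"
  unfolding poincare_def PX_def Cn_def by simp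

lemma special_mem: "g \<in> special m D X \<longleftrightarrow> (\<exists>w\<in>lists X. g = cls w)"
  unfolding special_def by blast

lemma Cn_mem: "g \<in> Cn X n \<longleftrightarrow> (\<exists>w\<in>lists X. g = cls w \<and> Lw w = n)"
proof
  assume "g \<in> Cn X n"
  then obtain w where "w \<in> lists X" "g = cls w" "word_length g = n" unfolding Cn_def special_mem by blast
  then have "Lw w = n" using wl_cls[of w] by simp
  then show "\<exists>w\<in>lists X. g = cls w \<and> Lw w = n" using \<open>w \<in> lists X\<close> \<open>g = cls w\<close> by blast
next
  assume "\<exists>w\<in>lists X. g = cls w \<and> Lw w = n"
  then obtain w where "w \<in> lists X" "g = cls w" "Lw w = n" by blast
  then have "word_length g = n" using wl_cls[of w] by simp
  then show "g \<in> Cn X n" unfolding Cn_def special_mem using \<open>w \<in> lists X\<close> \<open>g = cls w\<close> by blast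
qed

lemma Cn_finite: assumes "X \<subseteq> D" shows "finite (Cn X n)"
proof -
  have "Cn X n \<subseteq> cls ` {xs. set xs \<subseteq> D \<and> length xs = n}"
  proof
    fix g assume "g \<in> Cn X n"
    then obtain w where w: "w \<in> lists X" "g = cls w" "Lw w = n"
      unfolding Cn_mem by blast
    obtain v where v: "v \<in> lists X" "reduced v" "ceq w v" "length v = Lw w" using Lw_ex[OF assms w(1)] by blast
    have "g = cls v" using w(2) cox_elem_eq[OF v(3)] by simp
    moreover have "v \<in> {xs. set xs \<subseteq> D \<and> length xs = n}" using v w(3) assms
      by (auto simp: in_lists_conv_set)
    ultimately show "g \<in> cls ` {xs. set xs \<subseteq> D \<and> length xs = n}" by blast
  qed
  moreover have "finite (cls ` {xs. set xs \<subseteq> D \<and> length xs = n})"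
    by (rule finite_imageI[OF finite_lists_length_eq[OF finD]])
  ultimately show ?thesis by (rule finite_subset)
qed

lemma Cn_0: assumes "X \<subseteq> D" shows "Cn X 0 = {cls []}"
proof (rule set_eqI, rule iffI)
  fix g assume "g \<in> Cn X 0"
  then obtain w where w: "w \<in> lists X" "g = cls w" "Lw w = 0"
    unfolding Cn_mem by blast
  have "w \<in> lists D" using w(1) assms by (meson lists_mono subsetD)
  then have "ceq w []" using Lw_0 w(3) by blast
  then show "g \<in> {cls []}" using w(2) cox_elem_eq[of w "[]"] by simp
next
  fix g assume "g \<in> {cls []}"
  moreover have "Lw [] = 0" using Lw_le[of "[]"] by simp
  ultimately show "g \<in> Cn X 0" unfolding Cn_mem by (intro bexI[of _ "[]"]) auto
qed

lemma PX_0: "X \<subseteq> D \<Longrightarrow> PX X $ 0 = 1"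
  unfolding PX_def using Cn_0 by simp

lemma PX_mult: assumes Y: "Y \<subseteq> X" and X: "X \<subseteq> D" shows "PX X = QX X Y * PX Y"
proof (rule fps_ext)
  fix n
  have YD: "Y \<subseteq> D" using Y X by simp
  define A where "A i = {g \<in> Cn X i. nodg Y g}" for i
  define B where "B j = Cn Y j" for j
  define T where "T = (SIGMA i:{0..n}. A i \<times> B (n - i))"
  have fA: "finite (A i)" for i unfolding A_def using Cn_finite[OF X] by simp
  have fB: "finite (B j)" for j unfolding B_def using Cn_finite[OF YD] by simp
  have cardT: "card T = (\<Sum>i=0..n. card (A i) * card (B (n - i)))"
    unfolding T_def using fA fB by (simp add: card_cartesian_product)
  define f where "f = (\<lambda>(i::nat, (g, h)). cmul g h)"
  have repA: "\<exists>u\<in>lists X. g = cls u \<and> minc Y u \<and> Lw u = i" if "g \<in> A i" for g i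
  proof -
    from that obtain u where u: "u \<in> lists X" "g = cls u" "Lw u = i" "nodg Y g"
      unfolding A_def Cn_mem by blast
    have uD: "u \<in> lists D" using u(1) X by (meson lists_mono subsetD)
    have "\<forall>s\<in>Y. \<not> desc u s" using nodg_cls[OF uD YD] u(2,4) by simp
    then have "minc Y u" using nodesc_minc[OF YD uD] by blast
    then show ?thesis using u by blast
  qed
  have repB: "\<exists>v\<in>lists Y. h = cls v \<and> Lw v = j" if "h \<in> B j" for h j
    using that unfolding B_def Cn_mem by blast
  have bij: "bij_betw f T (Cn X n)"
  proof (rule bij_betwI')
    fix x y assume x: "x \<in> T" and y: "y \<in> T"
    obtain i g h where xi: "x = (i, (g, h))" "i \<le> n" "g \<in> A i" "h \<in> B (n - i)" using x unfolding T_def by auto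
    obtain i' g' h' where yi: "y = (i', (g', h'))" "i' \<le> n" "g' \<in> A i'" "h' \<in> B (n - i')" using y unfolding T_def by auto
    obtain u where u: "u \<in> lists X" "g = cls u" "minc Y u" "Lw u = i" using repA[OF xi(3)] by blast
    obtain v where v: "v \<in> lists Y" "h = cls v" "Lw v = n - i" using repB[OF xi(4)] by blast
    obtain u' where u': "u' \<in> lists X" "g' = cls u'" "minc Y u'" "Lw u' = i'" using repA[OF yi(3)] by blast
    obtain v' where v': "v' \<in> lists Y" "h' = cls v'" "Lw v' = n - i'" using repB[OF yi(4)] by blast
    have uD: "u \<in> lists D" "u' \<in> lists D" using u(1) u'(1) X by (meson lists_mono subsetD)+
    have vD: "v \<in> lists D" "v' \<in> lists D" using v(1) v'(1) YD by (meson lists_mono subsetD)+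
    show "(f x = f y) = (x = y)"
    proof
      assume "f x = f y"
      then have "cls (u@v) = cls (u'@v')" unfolding f_def xi(1) yi(1) using u v u' v' cmul_cls uD vD by simp
      then have e: "ceq (u@v) (u'@v')" using cls_eq_iff by blast
      have uu: "ceq u u'" using decomp_unique[OF YD uD(1) u(3) uD(2) u'(3) v(1) v'(1) e] .
      have "ceq (u@v) (u@v')" using ceq_trans[OF e ceq_cong_r[OF ceq_sym[OF uu] vD(2)]] .
      then have vv: "ceq v v'" using ceq_cancel_l uD(1) vD(1) by blast
      have "i = i'" using u(4) u'(4) Lw_ceq[OF uu] by simp
      then show "x = y" using xi(1) yi(1) u(2) u'(2) v(2) v'(2) cox_elem_eq[OF uu] cox_elem_eq[OF vv] by simp
    qed simp
  next
    fix x assume x: "x \<in> T"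
    obtain i g h where xi: "x = (i, (g, h))" "i \<le> n" "g \<in> A i" "h \<in> B (n - i)" using x unfolding T_def by auto
    obtain u where u: "u \<in> lists X" "g = cls u" "minc Y u" "Lw u = i" using repA[OF xi(3)] by blast
    obtain v where v: "v \<in> lists Y" "h = cls v" "Lw v = n - i" using repB[OF xi(4)] by blast
    have uD: "u \<in> lists D" using u(1) X by (meson lists_mono subsetD)
    have vD: "v \<in> lists D" using v(1) YD by (meson lists_mono subsetD)
    have fx: "f x = cls (u@v)" unfolding f_def xi(1) using u v cmul_cls uD vD by simp
    have "Lw (u@v) = n" using add_len[OF YD uD u(3) v(1)] u(4) v(3) xi(2) by simp
    moreover have "u@v \<in> lists X" using u(1) v(1) Y by (auto simp: in_lists_conv_set)
    ultimately show "f x \<in> Cn X n" unfolding fx Cn_mem by blast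
  next
    fix g assume g: "g \<in> Cn X n"
    then obtain w where w: "w \<in> lists X" "g = cls w" "Lw w = n"
      unfolding Cn_mem by blast
    obtain w0 z where dc: "w0 \<in> lists X" "minc Y w0" "z \<in> lists Y" "ceq w (w0@z)"
      using decomp[OF Y X w(1)] by blast
    have w0D: "w0 \<in> lists D" using dc(1) X by (meson lists_mono subsetD)
    have zD: "z \<in> lists D" using dc(3) YD by (meson lists_mono subsetD)
    have ln: "Lw w0 + Lw z = n" using add_len[OF YD w0D dc(2) dc(3)] Lw_ceq[OF dc(4)] w(3) by simp
    have nd: "nodg Y (cls w0)" using nodg_cls[OF w0D YD] minc_nodesc[OF dc(2)] by blast
    have "cls w0 \<in> A (Lw w0)" unfolding A_def Cn_mem using dc(1) nd by blast
    moreover have "cls z \<in> B (n - Lw w0)" unfolding B_def Cn_mem using dc(3) ln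
      by (intro bexI[of _ z]) auto
    ultimately have "(Lw w0, (cls w0, cls z)) \<in> T" unfolding T_def using ln by auto
    moreover have "f (Lw w0, (cls w0, cls z)) = g"
      unfolding f_def using cmul_cls[OF w0D zD] w(2) cox_elem_eq[OF dc(4)] by simp
    ultimately show "\<exists>x\<in>T. g = f x" by metis
  qed
  have "card (Cn X n) = card T" using bij_betw_same_card[OF bij] by simp
  then have "real (card (Cn X n)) = (\<Sum>i=0..n. real (card (A i)) * real (card (B (n - i))))"
    using cardT by simp
  then show "PX X $ n = (QX X Y * PX Y) $ n"
    unfolding PX_def QX_def fps_mult_nth A_def B_def by simp
qed

lemma sum_pow_alt0: assumes "finite S" "S \<noteq> {}" shows "(\<Sum>Y\<in>Pow S. (-1::real) ^ card Y) = 0"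
proof -
  have "card {T. T \<subseteq> S \<and> {} \<subseteq> T \<and> even (card T)} = card {T. T \<subseteq> S \<and> {} \<subseteq> T \<and> odd (card T)}"
    using card_subsupersets_even_odd[of S "{}"] assms by auto
  then have "card {x. x \<in> Pow S \<and> even (card x)} = card {x. x \<in> Pow S \<and> odd (card x)}" by simp
  then show ?thesis using sum_alternating_cancels[of "Pow S" card] assms by simp
qed

lemma QX_alt: assumes X: "X \<subseteq> D" and inf: "infinite (special m D X)"
  shows "(\<Sum>Y\<in>Pow X. fps_const ((-1) ^ card Y) * QX X Y) = 0"
proof (rule fps_ext)
  fix n
  have fX: "finite X" using X finD finite_subset by blast
  have fC: "finite (Cn X n)" using Cn_finite[OF X] .
  have inner: "(\<Sum>Y\<in>Pow X. if nodg Y g then (-1::real) ^ card Y else 0) = 0" if g: "g \<in> Cn X n" for g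
  proof -
    obtain w where w: "w \<in> lists X" "g = cls w" using g unfolding Cn_mem by blast
    have wD: "w \<in> lists D" using w(1) X by (meson lists_mono subsetD)
    define De where "De = {s\<in>X. desc w s}"
    have ne: "X - De \<noteq> {}"
    proof
      assume "X - De = {}"
      then have "\<forall>s\<in>X. desc w s" unfolding De_def by blast
      then show False using top_finite[OF X w(1)] inf by blast
    qed
    have eqs: "{Y \<in> Pow X. nodg Y g} = Pow (X - De)"
    proof (rule set_eqI)
      fix Y
      show "Y \<in> {Y \<in> Pow X. nodg Y g} \<longleftrightarrow> Y \<in> Pow (X - De)"
      proof (cases "Y \<subseteq> X")
        case True
        then have "Y \<subseteq> D" using X by simp
        then show ?thesis using nodg_cls[OF wD] w(2) True unfolding De_def by auto
      next
        case False then show ?thesis by auto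
      qed
    qed
    have "(\<Sum>Y\<in>Pow X. if nodg Y g then (-1::real) ^ card Y else 0) = (\<Sum>Y\<in>{Y \<in> Pow X. nodg Y g}. (-1::real) ^ card Y)"
      using sum.inter_filter[of "Pow X" "\<lambda>Y. (-1::real) ^ card Y" "\<lambda>Y. nodg Y g"] fX by simp
    also have "\<dots> = 0" unfolding eqs using sum_pow_alt0[of "X - De"] fX ne by simp
    finally show ?thesis .
  qed
  have "(\<Sum>Y\<in>Pow X. (-1::real) ^ card Y * real (card {g \<in> Cn X n. nodg Y g}))
      = (\<Sum>Y\<in>Pow X. \<Sum>g\<in>Cn X n. if nodg Y g then (-1::real) ^ card Y else 0)"
  proof (rule sum.cong[OF refl])
    fix Y
    have "real (card {g \<in> Cn X n. nodg Y g}) = (\<Sum>g\<in>{g \<in> Cn X n. nodg Y g}. 1)" by simp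
    also have "\<dots> = (\<Sum>g\<in>Cn X n. if nodg Y g then 1 else 0)"
      using sum.inter_filter[OF fC, of "\<lambda>_. 1::real" "nodg Y"] by simp
    finally have cc: "real (card {g \<in> Cn X n. nodg Y g}) = (\<Sum>g\<in>Cn X n. if nodg Y g then 1 else 0)" .
    have "(-1::real) ^ card Y * real (card {g \<in> Cn X n. nodg Y g})
        = (\<Sum>g\<in>Cn X n. (-1::real) ^ card Y * (if nodg Y g then 1 else 0))"
      unfolding cc by (simp add: sum_distrib_left)
    also have "\<dots> = (\<Sum>g\<in>Cn X n. if nodg Y g then (-1::real) ^ card Y else 0)"
      by (rule sum.cong) auto
    finally show "(-1::real) ^ card Y * real (card {g \<in> Cn X n. nodg Y g})
        = (\<Sum>g\<in>Cn X n. if nodg Y g then (-1::real) ^ card Y else 0)" .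
  qed
  also have "\<dots> = (\<Sum>g\<in>Cn X n. \<Sum>Y\<in>Pow X. if nodg Y g then (-1::real) ^ card Y else 0)"
    by (rule sum.swap)
  also have "\<dots> = 0" using inner by simp
  finally have "(\<Sum>Y\<in>Pow X. (-1::real) ^ card Y * real (card {g \<in> Cn X n. nodg Y g})) = 0" .
  then show "(\<Sum>Y\<in>Pow X. fps_const ((-1) ^ card Y) * QX X Y) $ n = 0 $ n"
    unfolding QX_def by (simp add: fps_sum_nth)
qed

end


definition RV :: "real fps \<Rightarrow> real \<Rightarrow> bool" where
  "RV f c \<longleftrightarrow> (\<exists>a b. coeff b 0 \<noteq> 0 \<and> f * fps_of_poly b = fps_of_poly a \<and> degree a \<le> degree b
      \<and> coeff a (degree b) = c * lead_coeff b)"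

lemma coeff_mult_top:
  fixes a q :: "real poly"
  assumes "degree a \<le> n" shows "coeff (a*q) (n + degree q) = coeff a n * lead_coeff q"
proof (cases "degree a = n")
  case True then show ?thesis using coeff_mult_degree_sum[of a q] by simp
next
  case False
  then have lt: "degree a < n" using assms by simp
  then have "coeff a n = 0" by (simp add: coeff_eq_0)
  moreover have "degree (a*q) < n + degree q" using degree_mult_le[of a q] lt by simp
  then have "coeff (a*q) (n + degree q) = 0" by (simp add: coeff_eq_0)
  ultimately show ?thesis by simp
qed

lemma RV_add: assumes "RV f c" "RV g d" shows "RV (f+g) (c+d)"
proof -
  obtain a b where ab: "coeff b 0 \<noteq> 0" "f * fps_of_poly b = fps_of_poly a" "degree a \<le> degree b"
      "coeff a (degree b) = c * lead_coeff b" using assms(1) unfolding RV_def by blast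
  obtain a' b' where ab': "coeff b' 0 \<noteq> 0" "g * fps_of_poly b' = fps_of_poly a'" "degree a' \<le> degree b'"
      "coeff a' (degree b') = d * lead_coeff b'" using assms(2) unfolding RV_def by blast
  have b0: "b \<noteq> 0" "b' \<noteq> 0" using ab(1) ab'(1) by auto
  let ?A = "a*b' + a'*b" and ?B = "b*b'"
  have c1: "coeff ?B 0 \<noteq> 0" using ab(1) ab'(1) by (simp add: coeff_mult_0)
  have c2: "(f+g) * fps_of_poly ?B = fps_of_poly ?A"
  proof -
    have "(f+g) * fps_of_poly ?B = (f * fps_of_poly b) * fps_of_poly b' + (g * fps_of_poly b') * fps_of_poly b"
      by (simp add: fps_of_poly_mult algebra_simps)
    also have "\<dots> = fps_of_poly ?A" using ab(2) ab'(2) by (simp add: fps_of_poly_mult fps_of_poly_add)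
    finally show ?thesis .
  qed
  have dB: "degree ?B = degree b + degree b'" using degree_mult_eq[OF b0] .
  have d1: "degree (a*b') \<le> degree b + degree b'" using degree_mult_le[of a b'] ab(3) by simp
  have d2: "degree (a'*b) \<le> degree b + degree b'" using degree_mult_le[of a' b] ab'(3) by simp
  have c3: "degree ?A \<le> degree ?B" using degree_add_le[OF d1 d2] dB by simp
  have e1: "coeff (a*b') (degree b + degree b') = c * lead_coeff b * lead_coeff b'"
    using coeff_mult_top[OF ab(3), of b'] ab(4) by simp
  have e2: "coeff (a'*b) (degree b + degree b') = d * lead_coeff b' * lead_coeff b"
    using coeff_mult_top[OF ab'(3), of b] ab'(4) by (simp add: add.commute)
  have lB: "lead_coeff ?B = lead_coeff b * lead_coeff b'" by (rule lead_coeff_mult)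
  have "coeff ?A (degree ?B) = coeff (a*b') (degree b + degree b') + coeff (a'*b) (degree b + degree b')"
    unfolding dB by (simp only: coeff_add)
  also have "\<dots> = (c + d) * (lead_coeff b * lead_coeff b')" unfolding e1 e2 by (simp add: algebra_simps)
  finally have c4: "coeff ?A (degree ?B) = (c + d) * lead_coeff ?B" unfolding lB .
  show ?thesis unfolding RV_def using c1 c2 c3 c4 by blast
qed

lemma RV_scale: assumes "RV f c" shows "RV (fps_const k * f) (k*c)"
proof -
  obtain a b where ab: "coeff b 0 \<noteq> 0" "f * fps_of_poly b = fps_of_poly a" "degree a \<le> degree b"
      "coeff a (degree b) = c * lead_coeff b" using assms(1) unfolding RV_def by blast
  have "fps_const k * f * fps_of_poly b = fps_of_poly (smult k a)"
    using ab(2) by (simp add: fps_of_poly_smult mult.assoc)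
  moreover have "degree (smult k a) \<le> degree b" using ab(3) degree_smult_le order_trans by blast
  moreover have "coeff (smult k a) (degree b) = (k*c) * lead_coeff b" using ab(4) by simp
  ultimately show ?thesis unfolding RV_def using ab(1) by blast
qed

lemma RV_zero: "RV 0 0"
  unfolding RV_def by (intro exI[of _ 0] exI[of _ 1]) simp

lemma RV_sum: assumes "finite S" "\<And>Y. Y \<in> S \<Longrightarrow> RV (F Y) (c Y)" shows "RV (\<Sum>Y\<in>S. F Y) (\<Sum>Y\<in>S. c Y)"
  using assms
proof (induction S rule: finite_induct)
  case empty then show ?case using RV_zero by simp
next
  case (insert x S)
  then show ?case using RV_add[of "F x" "c x"] by simp
qed

lemma RV_inv_poly: assumes "coeff p 0 = (1::real)"
  shows "RV (inverse (fps_of_poly p)) (if degree p = 0 then 1 else 0)"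
proof -
  have "inverse (fps_of_poly p) * fps_of_poly p = fps_of_poly 1"
    using inverse_mult_eq_1[of "fps_of_poly p"] assms by simp
  moreover have "coeff (1::real poly) (degree p) = (if degree p = 0 then 1 else 0) * lead_coeff p"
  proof (cases "degree p = 0")
    case True then show ?thesis using assms by simp
  next
    case False then show ?thesis by (simp add: coeff_1)
  qed
  ultimately show ?thesis unfolding RV_def using assms by (intro exI[of _ 1] exI[of _ p]) simp
qed

lemma sum_supersets_alt0: assumes "finite X" "Z \<subset> X"
  shows "(\<Sum>Y\<in>{Y. Y \<subseteq> X \<and> Z \<subseteq> Y}. (-1::real) ^ card Y) = 0"
proof -
  have f: "finite {Y. Y \<subseteq> X \<and> Z \<subseteq> Y}" using assms(1) by simp
  have "card {T. T \<subseteq> X \<and> Z \<subseteq> T \<and> even (card T)} = card {T. T \<subseteq> X \<and> Z \<subseteq> T \<and> odd (card T)}"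
    using card_subsupersets_even_odd[OF assms] .
  then have "card {x. x \<in> {Y. Y \<subseteq> X \<and> Z \<subseteq> Y} \<and> even (card x)} = card {x. x \<in> {Y. Y \<subseteq> X \<and> Z \<subseteq> Y} \<and> odd (card x)}"
    by simp
  then show ?thesis using sum_alternating_cancels[OF f, of card] by simp
qed

context cox begin

lemma special_mono: "Y \<subseteq> X \<Longrightarrow> special m D Y \<subseteq> special m D X"
  unfolding special_def by (meson image_mono lists_mono)

definition vX :: "'a set \<Rightarrow> real" where
  "vX X = (\<Sum>Y\<in>{Y\<in>Pow X. finite (special m D Y)}. (-1::real) ^ card Y)"

definition Ppoly :: "'a set \<Rightarrow> real poly" where
  "Ppoly X = (\<Sum>g\<in>special m D X. monom 1 (word_length g))"

lemma PX_poly: assumes X: "X \<subseteq> D" and fin: "finite (special m D X)"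
  shows "PX X = fps_of_poly (Ppoly X)"
proof (rule fps_ext)
  fix n
  have "coeff (Ppoly X) n = (\<Sum>g\<in>special m D X. if word_length g = n then 1 else 0)"
    unfolding Ppoly_def by (simp add: coeff_sum coeff_monom)
  also have "\<dots> = (\<Sum>g\<in>Cn X n. 1)" unfolding Cn_def using sum.inter_filter[OF fin, of "\<lambda>_. 1::real"] by simp
  also have "\<dots> = real (card (Cn X n))" by simp
  finally show "PX X $ n = fps_of_poly (Ppoly X) $ n" unfolding PX_def by simp
qed

lemma RV_PX: assumes X: "X \<subseteq> D" shows "RV (inverse (PX X)) (vX X)"
proof -
  have fX: "finite X" using X finD finite_subset by blast
  show ?thesis using fX X
  proof (induction X rule: finite_psubset_induct)
    case (psubset X)
    have X: "X \<subseteq> D" using psubset.prems .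
    show ?case
    proof (cases "finite (special m D X)")
      case True
      have allf: "finite (special m D Y)" if "Y \<subseteq> X" for Y
        using special_mono[OF that] True finite_subset by blast
      have vx: "vX X = (\<Sum>Y\<in>Pow X. (-1::real) ^ card Y)" unfolding vX_def using allf
        by (intro sum.cong) auto
      have P: "PX X = fps_of_poly (Ppoly X)" using PX_poly[OF X True] .
      have c0: "coeff (Ppoly X) 0 = 1" using PX_0[OF X] P by (metis fps_of_poly_nth)
      have rv: "RV (inverse (PX X)) (if degree (Ppoly X) = 0 then 1 else 0)" using RV_inv_poly[OF c0] P by simp
      show ?thesis
      proof (cases "X = {}")
        case True
        have "vX X = 1" using vx True by simp
        moreover have "degree (Ppoly X) = 0"
        proof -
          have "\<forall>n>0. Cn X n = {}"
          proof (intro allI impI)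
            fix n :: nat assume "n > 0"
            show "Cn X n = {}"
            proof (rule ccontr)
              assume "Cn X n \<noteq> {}"
              then obtain g where "g \<in> Cn X n" by blast
              then obtain w where w: "w \<in> lists X" "Lw w = n" unfolding Cn_mem by blast
              then have "w = []" using True by (cases w) auto
              then show False using w(2) \<open>n > 0\<close> Lw_le[of "[]"] by simp
            qed
          qed
          then have "\<forall>n>0. coeff (Ppoly X) n = 0" using P unfolding PX_def
            by (metis card.empty fps_of_poly_nth fps_nth_Abs_fps of_nat_0)
          then show ?thesis by (meson degree_le le_zero_eq)
        qed
        ultimately show ?thesis using rv by simp
      next
        case False
        then obtain s where s: "s \<in> X" by blast
        have sD: "s \<in> D" using s X by auto
        have "cls [s] \<in> Cn X 1" unfolding Cn_mem using s Lw_single[OF sD] by (intro bexI[of _ "[s]"]) auto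
        then have "Cn X 1 \<noteq> {}" by blast
        then have "card (Cn X 1) \<noteq> 0" using Cn_finite[OF X] by simp
        then have "coeff (Ppoly X) 1 \<noteq> 0" using P unfolding PX_def
          by (metis fps_of_poly_nth fps_nth_Abs_fps of_nat_eq_0_iff)
        then have "degree (Ppoly X) \<noteq> 0" using le_degree by fastforce
        moreover have "vX X = 0" using vx sum_pow_alt0[OF psubset.hyps(1) False] by simp
        ultimately show ?thesis using rv by simp
      qed
    next
      case False
      let ?c = "\<lambda>Y. (-1::real) ^ card Y"
      let ?S = "Pow X - {X}"
      have IH: "RV (inverse (PX Y)) (vX Y)" if "Y \<in> ?S" for Y
        using psubset.IH[of Y] that X by auto
      have q: "QX X Y = PX X * inverse (PX Y)" if "Y \<in> Pow X" for Y
      proof -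
        have YD: "Y \<subseteq> D" using that X by auto
        have "PX X * inverse (PX Y) = QX X Y * (PX Y * inverse (PX Y))"
          using PX_mult[of Y X] that X by (simp add: mult.assoc)
        also have "PX Y * inverse (PX Y) = 1" using inverse_mult_eq_1'[of "PX Y"] PX_0[OF YD] by simp
        finally show ?thesis by simp
      qed
      have "PX X * (\<Sum>Y\<in>Pow X. fps_const (?c Y) * inverse (PX Y)) = 0"
      proof -
        have "PX X * (\<Sum>Y\<in>Pow X. fps_const (?c Y) * inverse (PX Y))
            = (\<Sum>Y\<in>Pow X. fps_const (?c Y) * QX X Y)"
          unfolding sum_distrib_left using q by (intro sum.cong) (auto simp: algebra_simps)
        also have "\<dots> = 0" using QX_alt[OF X False] .
        finally show ?thesis .
      qed
      moreover have "PX X \<noteq> 0" using PX_0[OF X] by (metis fps_zero_nth zero_neq_one)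
      ultimately have z: "(\<Sum>Y\<in>Pow X. fps_const (?c Y) * inverse (PX Y)) = 0" by simp
      have fP: "finite (Pow X)" using psubset.hyps(1) by simp
      have "(\<Sum>Y\<in>Pow X. fps_const (?c Y) * inverse (PX Y))
          = fps_const (?c X) * inverse (PX X) + (\<Sum>Y\<in>?S. fps_const (?c Y) * inverse (PX Y))"
        using sum.remove[OF fP, of X] by simp
      then have "fps_const (?c X) * inverse (PX X) = - (\<Sum>Y\<in>?S. fps_const (?c Y) * inverse (PX Y))"
        using z by (simp add: eq_neg_iff_add_eq_0)
      then have "fps_const (?c X) * (fps_const (?c X) * inverse (PX X))
          = fps_const (- ?c X) * (\<Sum>Y\<in>?S. fps_const (?c Y) * inverse (PX Y))" by (simp add: fps_const_neg[symmetric] del: fps_const_neg)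
      moreover have "fps_const (?c X) * (fps_const (?c X) * inverse (PX X)) = inverse (PX X)"
        by (simp add: mult.assoc[symmetric] fps_const_mult[symmetric] power_mult_distrib[symmetric])
      ultimately have inv: "inverse (PX X) = fps_const (- ?c X) * (\<Sum>Y\<in>?S. fps_const (?c Y) * inverse (PX Y))"
        by simp
      have fS: "finite ?S" using fP by simp
      have rv: "RV (inverse (PX X)) (- ?c X * (\<Sum>Y\<in>?S. ?c Y * vX Y))"
        unfolding inv by (intro RV_scale RV_sum[OF fS] IH)
      have val: "(\<Sum>Y\<in>?S. ?c Y * vX Y) = - ?c X * vX X"
      proof -
        let ?F = "{Z\<in>Pow X. finite (special m D Z)}"
        have fF: "finite ?F" using fP by simp
        have "(\<Sum>Y\<in>?S. ?c Y * vX Y) = (\<Sum>Y\<in>?S. \<Sum>Z\<in>{Z \<in> ?F. Z \<subseteq> Y}. ?c Y * ?c Z)"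
        proof (rule sum.cong[OF refl])
          fix Y assume Y: "Y \<in> ?S"
          have "{Z \<in> Pow Y. finite (special m D Z)} = {Z \<in> ?F. Z \<subseteq> Y}" using Y by auto
          then show "?c Y * vX Y = (\<Sum>Z\<in>{Z \<in> ?F. Z \<subseteq> Y}. ?c Y * ?c Z)"
            unfolding vX_def by (simp add: sum_distrib_left)
        qed
        also have "\<dots> = (\<Sum>Z\<in>?F. \<Sum>Y\<in>{Y \<in> ?S. Z \<subseteq> Y}. ?c Y * ?c Z)"
          by (rule sum.swap_restrict[OF fS fF])
        also have "\<dots> = (\<Sum>Z\<in>?F. - ?c X * ?c Z)"
        proof (rule sum.cong[OF refl])
          fix Z assume Z: "Z \<in> ?F"
          have ZX: "Z \<subset> X" using Z False by auto
          have fT: "finite {Y. Y \<subseteq> X \<and> Z \<subseteq> Y}" using psubset.hyps(1) by simp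
          have XT: "X \<in> {Y. Y \<subseteq> X \<and> Z \<subseteq> Y}" using ZX by auto
          have "(\<Sum>Y\<in>{Y. Y \<subseteq> X \<and> Z \<subseteq> Y}. ?c Y) = ?c X + (\<Sum>Y\<in>{Y. Y \<subseteq> X \<and> Z \<subseteq> Y} - {X}. ?c Y)"
            using sum.remove[OF fT XT] by simp
          moreover have "{Y. Y \<subseteq> X \<and> Z \<subseteq> Y} - {X} = {Y \<in> ?S. Z \<subseteq> Y}" by auto
          ultimately have "(\<Sum>Y\<in>{Y \<in> ?S. Z \<subseteq> Y}. ?c Y) = - ?c X"
            using sum_supersets_alt0[OF psubset.hyps(1) ZX] by simp
          then show "(\<Sum>Y\<in>{Y \<in> ?S. Z \<subseteq> Y}. ?c Y * ?c Z) = - ?c X * ?c Z"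
            by (simp add: sum_distrib_right[symmetric])
        qed
        also have "\<dots> = - ?c X * vX X" unfolding vX_def by (simp add: sum_distrib_left)
        finally show ?thesis .
      qed
      have "- ?c X * (- ?c X * vX X) = vX X"
        by (simp add: mult.assoc[symmetric] power_mult_distrib[symmetric])
      then show ?thesis using rv val by simp
    qed
  qed
qed

end


lemma coeff_qint: "coeff (qint n) i = (if i < n then 1 else 0)"
  unfolding qint_def by (simp add: coeff_sum coeff_monom)

lemma degree_qint: assumes "n \<ge> 1" shows "degree (qint n) = n - 1" "lead_coeff (qint n) = 1"
proof -
  have "degree (qint n) \<le> n - 1" by (rule degree_le) (auto simp: coeff_qint)
  moreover have "coeff (qint n) (n - 1) \<noteq> 0" using assms by (simp add: coeff_qint)
  then have "n - 1 \<le> degree (qint n)" by (rule le_degree)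
  ultimately show d: "degree (qint n) = n - 1" by simp
  show "lead_coeff (qint n) = 1" unfolding d using assms by (simp add: coeff_qint)
qed

lemma prod_qint: assumes "\<forall>n\<in>set ns. n \<ge> 2"
  shows "degree (prod_list (map qint ns)) = (\<Sum>n\<leftarrow>ns. n - 1) \<and> lead_coeff (prod_list (map qint ns)) = 1"
  using assms
proof (induction ns)
  case Nil then show ?case by simp
next
  case (Cons x ns)
  have x: "x \<ge> 1" using Cons.prems by simp
  have IH: "degree (prod_list (map qint ns)) = (\<Sum>n\<leftarrow>ns. n - 1)" "lead_coeff (prod_list (map qint ns)) = 1"
    using Cons by auto
  have nz1: "qint x \<noteq> 0" using degree_qint(2)[OF x] by auto
  have nz2: "prod_list (map qint ns) \<noteq> 0" using IH(2) by auto
  show ?case using degree_mult_eq[OF nz1 nz2] lead_coeff_mult[of "qint x" "prod_list (map qint ns)"]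
      degree_qint[OF x] IH by simp
qed

theorem mainTheorem9:
  fixes m :: "'a \<Rightarrow> 'a \<Rightarrow> nat" and D :: "'a set"
    and ns :: "nat list" and Sp :: "real poly"
  assumes cox: "coxeter_matrix m D"
    and inf: "infinite (coxW m D)"
    and ns2: "\<forall>n\<in>set ns. n \<ge> 2"
    and quot: "fps_of_poly Sp * poincare m D = fps_of_poly (prod_list (map qint ns))"
  defines "N \<equiv> (\<Sum>n\<leftarrow>ns. n - 1)"
  shows "degree Sp \<le> N
    \<and> coeff Sp N = (-1) ^ (card D + 1)
          - (\<Sum>X\<in>{X. X \<subset> D \<and> infinite (special m D X)}. (-1) ^ card X)
    \<and> ((\<forall>X. X \<subset> D \<longrightarrow> finite (special m D X)) \<longrightarrow> coeff Sp N = (-1) ^ (card D + 1))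
    \<and> (one_terminal m D \<longrightarrow>
         coeff Sp N = (-1) ^ card D * (real (card {X. X \<subset> D \<and> infinite (special m D X)}) - 1))"
proof -
  interpret cox m D using cox by unfold_locales
  let ?R = "prod_list (map qint ns)"
  have degR: "degree ?R = N" and lR: "lead_coeff ?R = 1" using prod_qint[OF ns2] unfolding N_def by auto
  have R0: "?R \<noteq> 0" using lR by auto
  have P: "poincare m D = PX D" by (rule poincare_PX)
  have P0: "PX D $ 0 = 1" using PX_0 by simp
  obtain a b where ab: "coeff b 0 \<noteq> 0" "inverse (PX D) * fps_of_poly b = fps_of_poly a" "degree a \<le> degree b"
      "coeff a (degree b) = vX D * lead_coeff b" using RV_PX[of D] unfolding RV_def by blast
  have b0: "b \<noteq> 0" using ab(1) by auto
  have "fps_of_poly Sp = fps_of_poly Sp * (PX D * inverse (PX D))"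
    using inverse_mult_eq_1'[of "PX D"] P0 by simp
  also have "\<dots> = fps_of_poly ?R * inverse (PX D)" using quot P by (simp add: mult.assoc[symmetric])
  finally have Sp: "fps_of_poly Sp = fps_of_poly ?R * inverse (PX D)" .
  have "fps_of_poly (Sp * b) = fps_of_poly ?R * (inverse (PX D) * fps_of_poly b)"
    using Sp by (simp add: fps_of_poly_mult mult.assoc)
  also have "\<dots> = fps_of_poly (?R * a)" using ab(2) by (simp add: fps_of_poly_mult)
  finally have eq: "Sp * b = ?R * a" using fps_of_poly_eq_iff by blast
  have Sp0: "Sp \<noteq> 0"
  proof
    assume "Sp = 0"
    then have "fps_of_poly ?R = 0" using quot by simp
    then show False using R0 by (metis fps_of_poly_0 fps_of_poly_eq_iff)
  qed
  have a0: "a \<noteq> 0" using eq Sp0 b0 by auto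
  have "degree Sp + degree b = degree (?R * a)" using eq degree_mult_eq[OF Sp0 b0] by simp
  also have "\<dots> = N + degree a" using degree_mult_eq[OF R0 a0] degR by simp
  finally have degSp: "degree Sp \<le> N" using ab(3) by simp
  have "coeff (Sp * b) (N + degree b) = coeff Sp N * lead_coeff b" using coeff_mult_top[OF degSp] .
  moreover have "coeff (?R * a) (N + degree b) = vX D * lead_coeff b"
    using coeff_mult_top[OF ab(3), of ?R] ab(4) degR lR by (simp add: mult.commute add.commute)
  ultimately have cN: "coeff Sp N = vX D" using eq ab(1) b0 by simp
  have fD: "finite D" using finD .
  have Dne: "D \<noteq> {}"
  proof
    assume "D = {}"
    then have "coxW m D \<subseteq> {cls []}" unfolding special_def by (auto simp: lists_empty)
    then show False using inf finite_subset by blast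
  qed
  let ?c = "\<lambda>Y. (-1::real) ^ card Y"
  let ?I = "{X. X \<subset> D \<and> infinite (special m D X)}"
  let ?F = "{Y \<in> Pow D. finite (special m D Y)}"
  have "?I \<subseteq> Pow D" by auto
  then have fI: "finite ?I" using fD finite_subset by blast
  have e1: "Pow D = ?F \<union> insert D ?I" using inf by auto
  have dj: "?F \<inter> insert D ?I = {}" using inf by auto
  have fF: "finite ?F" using fD by simp
  have s0: "(\<Sum>Y\<in>?F \<union> insert D ?I. ?c Y) = (\<Sum>Y\<in>?F. ?c Y) + (\<Sum>Y\<in>insert D ?I. ?c Y)"
    by (rule sum.union_disjoint[OF fF _ dj]) (use fI in simp)
  have s1: "(\<Sum>Y\<in>Pow D. ?c Y) = (\<Sum>Y\<in>?F. ?c Y) + (\<Sum>Y\<in>insert D ?I. ?c Y)"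
    using arg_cong[OF e1, of "sum ?c"] s0 by (rule trans)
  have s2: "(\<Sum>Y\<in>insert D ?I. ?c Y) = ?c D + (\<Sum>Y\<in>?I. ?c Y)" by (rule sum.insert[OF fI]) simp
  have z: "(\<Sum>Y\<in>Pow D. ?c Y) = 0" by (rule sum_pow_alt0[OF fD Dne])
  have vF: "vX D = (\<Sum>Y\<in>?F. ?c Y)" unfolding vX_def by (rule refl)
  have cD: "(-1::real) ^ (card D + 1) = - ?c D" by simp
  have vD: "vX D = (-1) ^ (card D + 1) - (\<Sum>X\<in>?I. ?c X)"
    using z vF cD s1 s2 by linarith
  have part1: "coeff Sp N = (-1) ^ (card D + 1) - (\<Sum>X\<in>?I. ?c X)" using cN vD by simp
  have part2: "(\<forall>X. X \<subset> D \<longrightarrow> finite (special m D X)) \<longrightarrow> coeff Sp N = (-1) ^ (card D + 1)"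
  proof
    assume "\<forall>X. X \<subset> D \<longrightarrow> finite (special m D X)"
    then have "?I = {}" by auto
    then have "(\<Sum>X\<in>?I. ?c X) = 0" by (simp only: sum.empty)
    then show "coeff Sp N = (-1) ^ (card D + 1)" using part1 by simp
  qed
  have part3: "one_terminal m D \<longrightarrow> coeff Sp N = (-1) ^ card D * (real (card ?I) - 1)"
  proof
    assume ot: "one_terminal m D"
    have cX: "card X = card D - 1" if X: "X \<in> ?I" for X
    proof (rule ccontr)
      assume ne: "card X \<noteq> card D - 1"
      have XD: "X \<subset> D" and infX: "infinite (special m D X)" using X by auto
      have lt: "card X < card D" using psubset_card_mono[OF fD XD] .
      obtain d where d: "d \<in> D" "d \<notin> X" using XD by blast
      let ?X' = "insert d X"
      have fX: "finite X" using XD fD finite_subset by blast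
      have cX': "card ?X' = Suc (card X)" using d(2) fX by simp
      have sub: "?X' \<subseteq> D" using d(1) XD by blast
      have "card ?X' < card D" using cX' lt ne by simp
      then have "?X' \<noteq> D" by auto
      then have X'D: "?X' \<subset> D" using sub by blast
      have "infinite (special m D ?X')" using special_mono[of X ?X'] infX finite_subset by blast
      moreover have "X \<subset> ?X'" using d(2) by blast
      moreover have "\<forall>X. X \<subset> D \<and> infinite (special m D X) \<longrightarrow> \<not> (\<exists>Y. Y \<subset> X \<and> infinite (special m D Y))"
        using ot unfolding one_terminal_def by blast
      ultimately show False using X'D infX by blast
    qed
    have "(\<Sum>X\<in>?I. ?c X) = (\<Sum>X\<in>?I. (-1::real) ^ (card D - 1))" using cX by (intro sum.cong) auto
    also have "\<dots> = real (card ?I) * (-1) ^ (card D - 1)" by simp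
    also have "(-1::real) ^ (card D - 1) = - ((-1) ^ card D)"
    proof -
      have "card D \<ge> 1" using Dne fD by (simp add: Suc_leI card_gt_0_iff)
      then obtain k where "card D = Suc k" by (cases "card D") auto
      then show ?thesis by simp
    qed
    finally have "(\<Sum>X\<in>?I. ?c X) = - real (card ?I) * (-1) ^ card D" by simp
    then show "coeff Sp N = (-1) ^ card D * (real (card ?I) - 1)" using part1 by (simp add: algebra_simps)
  qed
  show ?thesis using degSp part1 part2 part3 by blast
qed


end
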